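(* Let $X_1,\dots,X_n$ be i.i.d. from $P$ on $[0,1]^r$ with density $p$ satisfying $|p(x)-p(y)|\le L\|x-y\|$ for all $x,y$ (some constant $L>0$), and let $F$ be its cdf. Let $Z_1,\dots,Z_k$ be, given $X$, i.i.d. draws from $\hat f_{m,\delta}=(1-\delta)\hat f_m+\delta$, where $m\asymp n^{r/(6+r)}$, $k\asymp n^{4/(6+r)}$ and $\delta=mk/(n\alpha)$ (so that $\alpha$-differential privacy holds). Then $$\mathbb E\sup_{x\in[0,1]^r}|F(x)-\hat F_Z(x)|=O\Big(\frac{\sqrt{\log n}}{n^{2/(6+r)}}\Big).$$
   Context: Histogram: let $0<h<1$ be a binwidth with $m=h^{-r}$ an integer, and partition $[0,1]^r$ into $m$ cubes $B_1,\dots,B_m$ of side $h$. Let $C_j=\sum_{i=1}^n I(X_i\in B_j)$, $\hat p_j=C_j/n$, and $\hat f_m(x)=\sum_{j=1}^m (\hat p_j/h^r)I(x\in B_j)$. $\hat F_Z(t)=k^{-1}\#\{i: Z_i\le t\}$ (componentwise order) is the empirical cdf of $Z$; $F(t)=P(X\le t)$ componentwise. $\mathbb E$ is the expectation over both $X\sim P^n$ and the randomness of $Z$ given $X$. $a_n\asymp b_n$ means $a_n/b_n$ and $b_n/a_n$ are bounded for large $n$. The constant $\alpha>0$ is fixed. *)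

theory Defs
  imports "HOL-Probability.Probability" "HOL-Library.Landau_Symbols"
begin

text \<open>Points of [0,1]^r are vectors of type real^'r, with r = CARD('r).\<close>

definition unit_cube :: "(real ^ 'r) set" where
  "unit_cube = {x. \<forall>i. 0 \<le> x $ i \<and> x $ i \<le> 1}"

definition vle :: "real ^ 'r \<Rightarrow> real ^ 'r \<Rightarrow> bool" where
  "vle x y \<longleftrightarrow> (\<forall>i. x $ i \<le> y $ i)"

text \<open>Histogram with N bins per side (binwidth h = 1/N, m = N^r cubes).
  The cube containing x is indexed by bin_idx N x; the right boundary 1 is put in the last bin.\<close>
definition bin_idx :: "nat \<Rightarrow> real ^ 'r \<Rightarrow> 'r \<Rightarrow> nat" where
  "bin_idx N x = (\<lambda>i. min (N - 1) (nat \<lfloor>real N * x $ i\<rfloor>))"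

text \<open>hat f_m(x) = (C_j / n) / h^r for x in B_j, with C_j the count of sample points in B_j.\<close>
definition hist :: "nat \<Rightarrow> nat \<Rightarrow> (nat \<Rightarrow> real ^ 'r) \<Rightarrow> real ^ 'r \<Rightarrow> real" where
  "hist N n xs x =
     (if x \<in> unit_cube then
        real (card {i \<in> {..<n}. xs i \<in> unit_cube \<and> bin_idx N (xs i) = bin_idx N x})
          / real n * real N ^ CARD('r)
      else 0)"

definition priv_density :: "nat \<Rightarrow> nat \<Rightarrow> real \<Rightarrow> (nat \<Rightarrow> real ^ 'r) \<Rightarrow> real ^ 'r \<Rightarrow> real" where
  "priv_density N n \<delta> xs z = indicator unit_cube z * ((1 - \<delta>) * hist N n xs z + \<delta>)"

definition cdf_vec :: "(real ^ 'r) measure \<Rightarrow> real ^ 'r \<Rightarrow> real" where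
  "cdf_vec P t = measure P {x \<in> space P. vle x t}"

definition ecdf_vec :: "nat \<Rightarrow> (nat \<Rightarrow> real ^ 'r) \<Rightarrow> real ^ 'r \<Rightarrow> real" where
  "ecdf_vec k zs t = real (card {i \<in> {..<k}. vle (zs i) t}) / real k"

definition expected_sup_error ::
  "(real ^ 'r) measure \<Rightarrow> nat \<Rightarrow> nat \<Rightarrow> nat \<Rightarrow> real \<Rightarrow> ennreal" where
  "expected_sup_error P n N k \<delta> =
     (\<integral>\<^sup>+ xs. (\<integral>\<^sup>+ zs. (SUP x\<in>unit_cube. ennreal \<bar>cdf_vec P x - ecdf_vec k zs x\<bar>)
         \<partial>(PiM {..<k} (\<lambda>_. density lborel (\<lambda>z. ennreal (priv_density N n \<delta> xs z)))))
       \<partial>(PiM {..<n} (\<lambda>_. P)))"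

end

theory Submission
  imports Defs
begin

lemma indep_coords:
  assumes M: "prob_space M" and I: "I \<noteq> {}"
  shows "prob_space.indep_vars (PiM I (\<lambda>_. M)) (\<lambda>_. M) (\<lambda>i \<omega>. \<omega> i) I"
proof -
  interpret PS: prob_space "PiM I (\<lambda>_. M)"
    by (intro prob_space_PiM) (use M in auto)
  have "distr (PiM I (\<lambda>_. M)) (PiM I (\<lambda>_. M)) (\<lambda>x. \<lambda>i\<in>I. x i) = distr (PiM I (\<lambda>_. M)) (PiM I (\<lambda>_. M)) (\<lambda>x. x)"
    by (rule distr_cong) (auto simp: space_PiM PiE_def extensional_restrict)
  also have "\<dots> = PiM I (\<lambda>_. M)" by simp
  also have "\<dots> = PiM I (\<lambda>i. distr (PiM I (\<lambda>_. M)) M (\<lambda>\<omega>. \<omega> i))"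
    by (intro PiM_cong refl distr_PiM_component[symmetric]) (use M in auto)
  finally show ?thesis
    by (subst PS.indep_vars_iff_distr_eq_PiM'[OF I]) auto
qed

lemma card_eq_sum_indicator:
  fixes n :: nat
  shows "real (card {i\<in>{..<n}. xs i \<in> S}) = (\<Sum>i<n. indicator S (xs i))"
proof -
  have "(\<Sum>i<n. indicator S (xs i)::real) = (\<Sum>i\<in>{..<n}. if xs i \<in> S then 1 else 0)"
    by (simp add: indicator_def of_bool_def)
  also have "\<dots> = (\<Sum>i\<in>{i\<in>{..<n}. xs i \<in> S}. 1)"
    by (rule sum.inter_filter[symmetric]) simp
  finally show ?thesis by simp
qed

lemma hoeffding_set:
  assumes M: "prob_space M" and n: "n > 0" and S: "S \<in> sets M" and eps: "\<epsilon> \<ge> 0"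
  shows "emeasure (PiM {..<n} (\<lambda>_. M)) {xs \<in> space (PiM {..<n} (\<lambda>_. M)).
           \<bar>real (card {i\<in>{..<n}. xs i \<in> S}) / real n - measure M S\<bar> \<ge> \<epsilon>}
         \<le> ennreal (2 * exp (-2 * real n * \<epsilon>\<^sup>2))"
proof -
  let ?P = "PiM {..<n} (\<lambda>_. M)"
  interpret PS: prob_space ?P
    by (intro prob_space_PiM) (use M in auto)
  have I: "{..<n::nat} \<noteq> {}" using n by auto
  have ind: "PS.indep_vars (\<lambda>_. borel) (\<lambda>i \<omega>. indicator S (\<omega> i) :: real) {..<n}"
    using PS.indep_vars_compose2[OF indep_coords[OF M I], of "\<lambda>_ x. indicator S x" "\<lambda>_. borel"] S
    by auto
  interpret H: Hoeffding_ineq ?P "{..<n}" "\<lambda>i \<omega>. indicator S (\<omega> i) :: real" "\<lambda>_. 0" "\<lambda>_. 1"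
    "\<Sum>i<n. PS.expectation (\<lambda>\<omega>. indicator S (\<omega> i) :: real)"
    by unfold_locales (use ind in \<open>auto simp: indicator_def\<close>)
  have expi: "PS.expectation (\<lambda>\<omega>. indicator S (\<omega> i) :: real) = measure M S" if "i < n" for i
  proof -
    have "PS.expectation (\<lambda>\<omega>. indicator S (\<omega> i) :: real) = integral\<^sup>L (distr ?P M (\<lambda>\<omega>. \<omega> i)) (indicator S)"
      by (subst integral_distr) (use S that in auto)
    also have "distr ?P M (\<lambda>\<omega>. \<omega> i) = M"
      by (rule distr_PiM_component) (use M that in auto)
    finally show ?thesis using S by simp
  qed
  have mu: "(\<Sum>i<n. PS.expectation (\<lambda>\<omega>. indicator S (\<omega> i) :: real)) = real n * measure M S"
    using expi by simp
  have "{xs \<in> space ?P. \<bar>real (card {i\<in>{..<n}. xs i \<in> S}) / real n - measure M S\<bar> \<ge> \<epsilon>}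
      = {xs \<in> space ?P. \<bar>(\<Sum>i<n. indicator S (xs i)) - real n * measure M S\<bar> \<ge> real n * \<epsilon>}"
  proof -
    have "\<bar>a / real n - b\<bar> \<ge> \<epsilon> \<longleftrightarrow> \<bar>a - real n * b\<bar> \<ge> real n * \<epsilon>" for a b
    proof -
      have "\<bar>a - real n * b\<bar> = real n * \<bar>a / real n - b\<bar>" using n
        by (simp add: field_simps abs_mult[symmetric])
      thus ?thesis using n by (simp add: mult_le_cancel_left_pos)
    qed
    thus ?thesis unfolding card_eq_sum_indicator by simp
  qed
  also have "PS.prob \<dots> \<le> 2 * exp (-2 * (real n * \<epsilon>)\<^sup>2 / (\<Sum>i<n. (1 - 0)\<^sup>2))"
    using H.Hoeffding_ineq_abs_ge[of "real n * \<epsilon>"] eps n mu by simp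
  also have "-2 * (real n * \<epsilon>)\<^sup>2 / (\<Sum>i<n. (1 - (0::real))\<^sup>2) = -2 * real n * \<epsilon>\<^sup>2"
    using n by (simp add: power2_eq_square)
  finally show ?thesis by (simp add: PS.emeasure_eq_measure)
qed

lemma dev_bound:
  assumes M: "prob_space M" and n: "n > 0" and fin: "finite SS" and SS: "SS \<subseteq> sets M"
    and eps: "\<epsilon> \<ge> 0"
    and f: "\<And>xs. xs \<in> space (PiM {..<n} (\<lambda>_. M)) \<Longrightarrow> f xs \<le> 1 \<and>
      (f xs \<le> ennreal \<epsilon> \<or> (\<exists>S\<in>SS. \<bar>real (card {i\<in>{..<n}. xs i \<in> S}) / real n - measure M S\<bar> \<ge> \<epsilon>))"
  shows "(\<integral>\<^sup>+ xs. f xs \<partial>PiM {..<n} (\<lambda>_. M)) \<le> ennreal (\<epsilon> + 2 * real (card SS) * exp (-2 * real n * \<epsilon>\<^sup>2))"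
proof -
  let ?P = "PiM {..<n} (\<lambda>_. M)"
  interpret PS: prob_space ?P
    by (intro prob_space_PiM) (use M in auto)
  define E where "E S = {xs \<in> space ?P. \<bar>real (card {i\<in>{..<n}. xs i \<in> S}) / real n - measure M S\<bar> \<ge> \<epsilon>}" for S
  have Emeas: "E S \<in> sets ?P" if "S \<in> SS" for S
  proof -
    have [measurable]: "S \<in> sets M" using that SS by auto
    have "E S = {xs \<in> space ?P. \<bar>(\<Sum>i<n. indicator S (xs i)) / real n - measure M S\<bar> \<ge> \<epsilon>}"
      unfolding E_def card_eq_sum_indicator by simp
    also have "\<dots> \<in> sets ?P" by measurable
    finally show ?thesis .
  qed
  have "(\<integral>\<^sup>+ xs. f xs \<partial>?P) \<le> (\<integral>\<^sup>+ xs. ennreal \<epsilon> + indicator (\<Union>S\<in>SS. E S) xs \<partial>?P)"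
  proof (rule nn_integral_mono)
    fix xs assume xs: "xs \<in> space ?P"
    from f[OF xs] show "f xs \<le> ennreal \<epsilon> + indicator (\<Union>S\<in>SS. E S) xs"
    proof (elim conjE disjE)
      assume "f xs \<le> ennreal \<epsilon>" thus ?thesis by (simp add: add_increasing2)
    next
      assume "f xs \<le> 1" and "\<exists>S\<in>SS. \<bar>real (card {i\<in>{..<n}. xs i \<in> S}) / real n - measure M S\<bar> \<ge> \<epsilon>"
      then have "indicator (\<Union>S\<in>SS. E S) xs = (1::ennreal)" using xs by (auto simp: E_def indicator_def)
      thus ?thesis using \<open>f xs \<le> 1\<close> by (simp add: add_increasing)
    qed
  qed
  also have "\<dots> = ennreal \<epsilon> + emeasure ?P (\<Union>S\<in>SS. E S)"
    using Emeas fin by (subst nn_integral_add) (auto simp: PS.emeasure_space_1 intro!: nn_integral_indicator sets.finite_UN)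
  also have "emeasure ?P (\<Union>S\<in>SS. E S) \<le> (\<Sum>S\<in>SS. emeasure ?P (E S))"
    using Emeas fin by (intro emeasure_subadditive_finite) auto
  also have "\<dots> \<le> (\<Sum>S\<in>SS. ennreal (2 * exp (-2 * real n * \<epsilon>\<^sup>2)))"
    unfolding E_def by (intro sum_mono hoeffding_set[OF M n _ eps]) (use SS in auto)
  also have "\<dots> = ennreal (real (card SS) * (2 * exp (-2 * real n * \<epsilon>\<^sup>2)))"
    by (simp add: ennreal_of_nat_eq_real_of_nat ennreal_mult)
  finally show ?thesis using eps
    by (simp add: ennreal_plus[symmetric] del: ennreal_plus) (simp add: mult.assoc mult.left_commute)
qed

lemma dev_bound_gen:
  assumes M: "prob_space M" and n: "n > 0" and fin: "finite SS" and SS: "SS \<subseteq> sets M"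
    and eps: "\<epsilon> \<ge> 0" and c: "c \<ge> 0" and a: "a \<ge> 0"
    and f: "\<And>xs. xs \<in> space (PiM {..<n} (\<lambda>_. M)) \<Longrightarrow> f xs \<le> ennreal (c + a) \<and>
      (f xs \<le> ennreal (c + a * \<epsilon>) \<or> (\<exists>S\<in>SS. \<bar>real (card {i\<in>{..<n}. xs i \<in> S}) / real n - measure M S\<bar> \<ge> \<epsilon>))"
  shows "(\<integral>\<^sup>+ xs. f xs \<partial>PiM {..<n} (\<lambda>_. M)) \<le> ennreal (c + a * (\<epsilon> + 2 * real (card SS) * exp (-2 * real n * \<epsilon>\<^sup>2)))"
proof -
  let ?P = "PiM {..<n} (\<lambda>_. M)"
  interpret PS: prob_space ?P
    by (intro prob_space_PiM) (use M in auto)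
  define E where "E S = {xs \<in> space ?P. \<bar>real (card {i\<in>{..<n}. xs i \<in> S}) / real n - measure M S\<bar> \<ge> \<epsilon>}" for S
  have Emeas: "E S \<in> sets ?P" if "S \<in> SS" for S
  proof -
    have [measurable]: "S \<in> sets M" using that SS by auto
    have "E S = {xs \<in> space ?P. \<bar>(\<Sum>i<n. indicator S (xs i)) / real n - measure M S\<bar> \<ge> \<epsilon>}"
      unfolding E_def card_eq_sum_indicator by simp
    also have "\<dots> \<in> sets ?P" by measurable
    finally show ?thesis .
  qed
  have U: "(\<Union>S\<in>SS. E S) \<in> sets ?P" using Emeas fin by auto
  have "(\<integral>\<^sup>+ xs. f xs \<partial>?P) \<le> (\<integral>\<^sup>+ xs. ennreal (c + a * \<epsilon>) + ennreal a * indicator (\<Union>S\<in>SS. E S) xs \<partial>?P)"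
  proof (rule nn_integral_mono)
    fix xs assume xs: "xs \<in> space ?P"
    from f[OF xs] show "f xs \<le> ennreal (c + a * \<epsilon>) + ennreal a * indicator (\<Union>S\<in>SS. E S) xs"
    proof (elim conjE disjE)
      assume "f xs \<le> ennreal (c + a * \<epsilon>)" thus ?thesis by (simp add: add_increasing2)
    next
      assume f1: "f xs \<le> ennreal (c + a)" and "\<exists>S\<in>SS. \<bar>real (card {i\<in>{..<n}. xs i \<in> S}) / real n - measure M S\<bar> \<ge> \<epsilon>"
      then have "indicator (\<Union>S\<in>SS. E S) xs = (1::ennreal)" using xs by (auto simp: E_def indicator_def)
      hence "ennreal (c + a * \<epsilon>) + ennreal a * indicator (\<Union>S\<in>SS. E S) xs = ennreal (c + a * \<epsilon> + a)"
        using c a eps by (simp add: ennreal_plus[symmetric] del: ennreal_plus)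
      moreover have "ennreal (c + a) \<le> ennreal (c + a * \<epsilon> + a)" using a eps by (intro ennreal_leI) auto
      ultimately show ?thesis using f1 by simp
    qed
  qed
  also have "\<dots> = ennreal (c + a * \<epsilon>) + ennreal a * emeasure ?P (\<Union>S\<in>SS. E S)"
    using U by (subst nn_integral_add) (auto simp: PS.emeasure_space_1 nn_integral_cmult_indicator)
  also have "emeasure ?P (\<Union>S\<in>SS. E S) \<le> (\<Sum>S\<in>SS. emeasure ?P (E S))"
    using Emeas fin by (intro emeasure_subadditive_finite) auto
  also have "\<dots> \<le> (\<Sum>S\<in>SS. ennreal (2 * exp (-2 * real n * \<epsilon>\<^sup>2)))"
    unfolding E_def by (intro sum_mono hoeffding_set[OF M n _ eps]) (use SS in auto)
  also have "\<dots> = ennreal (real (card SS) * (2 * exp (-2 * real n * \<epsilon>\<^sup>2)))"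
    by (simp add: ennreal_of_nat_eq_real_of_nat ennreal_mult)
  finally have "(\<integral>\<^sup>+ xs. f xs \<partial>?P) \<le> ennreal (c + a * \<epsilon>) + ennreal a * ennreal (real (card SS) * (2 * exp (-2 * real n * \<epsilon>\<^sup>2)))"
    by (simp add: mult_left_mono add_left_mono)
  also have "\<dots> = ennreal (c + a * (\<epsilon> + 2 * real (card SS) * exp (-2 * real n * \<epsilon>\<^sup>2)))"
    using a c eps by (simp add: ennreal_mult[symmetric] ennreal_plus[symmetric] algebra_simps del: ennreal_plus)
  finally show ?thesis .
qed



definition bins :: "nat \<Rightarrow> ('r::finite \<Rightarrow> nat) set" where
  "bins N = PiE UNIV (\<lambda>_. {..<N})"

definition binset :: "nat \<Rightarrow> ('r::finite \<Rightarrow> nat) \<Rightarrow> (real^'r) set" where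
  "binset N j = {x \<in> unit_cube. bin_idx N x = j}"

definition binint :: "nat \<Rightarrow> nat \<Rightarrow> real set" where
  "binint N a = (if a = N - 1 then {real a / N .. 1} else {real a / N ..< (real a + 1) / N})"

lemma bin1:
  assumes N: "N > 0" and a: "a < N"
  shows "(0 \<le> y \<and> y \<le> 1 \<and> min (N - 1) (nat \<lfloor>real N * y\<rfloor>) = a) \<longleftrightarrow> y \<in> binint N a"
proof (cases "a = N - 1")
  case True
  have "(0 \<le> y \<and> y \<le> 1 \<and> min (N - 1) (nat \<lfloor>real N * y\<rfloor>) = a) \<longleftrightarrow> (0 \<le> y \<and> y \<le> 1 \<and> nat \<lfloor>real N * y\<rfloor> \<ge> N - 1)"
    using True by auto
  also have "\<dots> \<longleftrightarrow> (0 \<le> y \<and> y \<le> 1 \<and> \<lfloor>real N * y\<rfloor> \<ge> int (N - 1))"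
    using N by (auto simp: le_nat_iff of_nat_diff)
  also have "\<dots> \<longleftrightarrow> (0 \<le> y \<and> y \<le> 1 \<and> real N * y \<ge> real (N - 1))"
    by (simp add: le_floor_iff)
  also have "\<dots> \<longleftrightarrow> y \<in> binint N a"
  proof -
    have ny: "0 \<le> y" if "real (N - 1) \<le> real N * y"
    proof -
      have "0 \<le> real N * y" using that by (smt (verit) of_nat_0_le_iff)
      thus ?thesis using N by (simp add: zero_le_mult_iff)
    qed
    have "real (N - 1) \<le> real N * y \<longleftrightarrow> real (N-1) / N \<le> y"
      using N by (simp add: field_simps)
    thus ?thesis using True N ny by (auto simp: binint_def)
  qed
  finally show ?thesis .
next
  case False
  hence a': "a < N - 1" using a by auto
  have "(0 \<le> y \<and> y \<le> 1 \<and> min (N - 1) (nat \<lfloor>real N * y\<rfloor>) = a) \<longleftrightarrow> (0 \<le> y \<and> y \<le> 1 \<and> \<lfloor>real N * y\<rfloor> = int a)"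
    using a' by (auto simp: min_def split: if_splits) 
  also have "\<dots> \<longleftrightarrow> (0 \<le> y \<and> y \<le> 1 \<and> real a \<le> real N * y \<and> real N * y < real a + 1)"
    by (simp add: floor_eq_iff)
  also have "\<dots> \<longleftrightarrow> y \<in> binint N a"
  proof -
    have e1: "real a \<le> real N * y \<longleftrightarrow> real a / N \<le> y" using N by (simp add: field_simps)
    have e2: "real N * y < real a + 1 \<longleftrightarrow> y < (real a + 1) / N" using N by (simp add: field_simps)
    have h1: "0 \<le> real a / N" by simp
    have h2: "(real a + 1) / N \<le> 1" using a N by (simp add: field_simps)
    show ?thesis unfolding e1 e2 binint_def using False h1 h2 by (smt (verit) atLeastLessThan_iff)
  qed
  finally show ?thesis .
qed

lemma binset_eq:
  assumes N: "N > 0" and j: "j \<in> bins N"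
  shows "binset N j = {x. \<forall>i. x $ i \<in> binint N (j i)}"
proof -
  have ji: "j i < N" for i using j by (auto simp: bins_def)
  have "x \<in> binset N j \<longleftrightarrow> (\<forall>i. 0 \<le> x $ i \<and> x $ i \<le> 1 \<and> min (N - 1) (nat \<lfloor>real N * x $ i\<rfloor>) = j i)" for x
    by (auto simp: binset_def unit_cube_def bin_idx_def fun_eq_iff)
  thus ?thesis using bin1[OF N ji] by auto
qed

lemma bin_idx_bins: "N > 0 \<Longrightarrow> x \<in> unit_cube \<Longrightarrow> bin_idx N x \<in> bins N"
  by (auto simp: bins_def bin_idx_def)

lemma finite_bins: "finite (bins N)"
  by (auto simp: bins_def intro!: finite_PiE)

lemma card_bins: "card (bins N :: ('r::finite \<Rightarrow> nat) set) = N ^ CARD('r)"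
  by (simp add: bins_def card_PiE)

lemma cube_Union: "N > 0 \<Longrightarrow> unit_cube = (\<Union>j\<in>bins N. binset N j)"
  by (auto simp: binset_def bin_idx_bins)

lemma binset_disj: "j \<noteq> j' \<Longrightarrow> binset N j \<inter> binset N j' = {}"
  by (auto simp: binset_def)

lemma binset_cube: "binset N j \<subseteq> unit_cube"
  by (auto simp: binset_def)

lemma binint_sets[measurable]: "binint N a \<in> sets borel"
  by (simp add: binint_def)

lemma vec_nth_meas[measurable]: "(\<lambda>x::real^'r. x $ i) \<in> borel_measurable borel"
  by (intro borel_measurable_continuous_onI continuous_on_component continuous_on_id)

lemma binset_sets[measurable]:
  fixes j :: "'r::finite \<Rightarrow> nat"
  assumes N: "N > 0"
  shows "binset N j \<in> sets borel"
proof (cases "j \<in> bins N")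
  case True
  have "{x::real^'r. \<forall>i. x $ i \<in> binint N (j i)} \<in> sets borel" by measurable
  thus ?thesis using binset_eq[OF N True] by simp
next
  case False
  hence "binset N j = {}" using bin_idx_bins[OF N] by (auto simp: binset_def)
  thus ?thesis by simp
qed

lemma binset_coord:
  assumes N: "N > 0" and x: "x \<in> binset N j"
  shows "real (j i) / N \<le> x $ i" "x $ i \<le> (real (j i) + 1) / N" "j i < N"
    "j i \<noteq> N - 1 \<Longrightarrow> x $ i < (real (j i) + 1) / N"
proof -
  have jb: "j \<in> bins N" using x bin_idx_bins[OF N] by (auto simp: binset_def)
  thus "j i < N" by (auto simp: bins_def)
  have xi: "x $ i \<in> binint N (j i)" using binset_eq[OF N jb] x by auto
  have "real (j i) + 1 \<le> real N" using \<open>j i < N\<close> by linarith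
  hence "1 \<le> (real (j i) + 1) / N" if "j i = N - 1" using that N by (simp add: field_simps of_nat_diff)
  thus "real (j i) / N \<le> x $ i" "x $ i \<le> (real (j i) + 1) / N"
       "j i \<noteq> N - 1 \<Longrightarrow> x $ i < (real (j i) + 1) / N"
    using xi by (auto simp: binint_def split: if_splits)
qed

lemma emeasure_cbox_cart:
  fixes a b :: "real^'r::finite"
  assumes "\<And>i. a $ i \<le> b $ i"
  shows "emeasure lborel (cbox a b) = ennreal (\<Prod>i\<in>UNIV. b $ i - a $ i)"
    "emeasure lborel (box a b) = ennreal (\<Prod>i\<in>UNIV. b $ i - a $ i)"
proof -
  have ne: "cbox a b \<noteq> {}" using assms by (auto simp: interval_eq_empty_cart not_less)
  have "emeasure lborel (cbox a b) = ennreal (measure lborel (cbox a b))"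
    using emeasure_lborel_cbox_finite[of a b] by (simp add: emeasure_eq_ennreal_measure)
  thus c: "emeasure lborel (cbox a b) = ennreal (\<Prod>i\<in>UNIV. b $ i - a $ i)"
    using Henstock_Kurzweil_Integration.content_cbox_cart[OF ne] by simp
  have "emeasure lborel (box a b) = emeasure lborel (cbox a b)"
    by (simp only: emeasure_lborel_box_eq emeasure_lborel_cbox_eq)
  thus "emeasure lborel (box a b) = ennreal (\<Prod>i\<in>UNIV. b $ i - a $ i)" using c by simp
qed

lemma unit_cube_cbox: "unit_cube = cbox (0::real^'r::finite) (\<chi> i. 1)"
  by (auto simp: unit_cube_def mem_box_cart)

lemma unit_cube_sets[measurable]: "unit_cube \<in> sets borel"
  by (simp add: unit_cube_cbox)

lemma emeasure_unit_cube: "emeasure lborel (unit_cube :: (real^'r::finite) set) = 1"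
  unfolding unit_cube_cbox by (subst emeasure_cbox_cart) auto

lemma emeasure_binset:
  fixes j :: "'r::finite \<Rightarrow> nat"
  assumes N: "N > 0" and j: "j \<in> bins N"
  shows "emeasure lborel (binset N j) = ennreal ((1 / real N) ^ CARD('r))"
proof -
  define lo :: "real^'r" where "lo = (\<chi> i. real (j i) / N)"
  define hi :: "real^'r" where "hi = (\<chi> i. (real (j i) + 1) / N)"
  have le: "lo $ i \<le> hi $ i" for i using N by (simp add: lo_def hi_def divide_right_mono)
  have pr: "(\<Prod>i\<in>UNIV. hi $ i - lo $ i) = (1 / real N) ^ CARD('r)"
    by (simp add: lo_def hi_def diff_divide_distrib[symmetric])
  have sub1: "binset N j \<subseteq> cbox lo hi"
    using binset_coord[OF N] by (auto simp: mem_box_cart lo_def hi_def)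
  have sub2: "box lo hi \<subseteq> binset N j"
  proof
    fix x assume x: "x \<in> box lo hi"
    have "x $ i \<in> binint N (j i)" for i
    proof -
      have ji: "j i < N" using j by (auto simp: bins_def)
      have "real (j i) + 1 \<le> real N" using ji by linarith
      hence "(real (j i) + 1) / N \<le> 1" using N by (simp add: field_simps)
      thus ?thesis using x[unfolded mem_box_cart, rule_format, of i]
        by (auto simp: binint_def lo_def hi_def)
    qed
    thus "x \<in> binset N j" using binset_eq[OF N j] by auto
  qed
  have "emeasure lborel (binset N j) \<le> ennreal ((1 / real N) ^ CARD('r))"
    using emeasure_mono[OF sub1, of lborel] emeasure_cbox_cart(1)[OF le] pr by simp
  moreover have "emeasure lborel (binset N j) \<ge> ennreal ((1 / real N) ^ CARD('r))"
    using emeasure_mono[OF sub2, of lborel] emeasure_cbox_cart(2)[OF le] pr binset_sets[OF N, of j] by simp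
  ultimately show ?thesis by (rule antisym)
qed



lemma binset_fin: "N > 0 \<Longrightarrow> emeasure lborel (A \<inter> binset N j) < \<infinity>"
proof -
  assume N: "N > 0"
  have "emeasure lborel (A \<inter> binset N j) \<le> emeasure lborel (unit_cube :: (real^'a) set)"
    by (intro emeasure_mono) (auto simp: binset_def)
  thus ?thesis by (simp add: emeasure_unit_cube top.not_eq_extremum order.strict_trans1)
qed

lemma binset_fin': "N > 0 \<Longrightarrow> emeasure lborel (A \<inter> binset N j) \<noteq> top"
  using binset_fin[of N A j] by auto

lemma pc_emeasure:
  fixes c :: "('r::finite \<Rightarrow> nat) \<Rightarrow> real"
  assumes N: "N > 0" and c: "\<And>j. c j \<ge> 0" and A[measurable]: "A \<in> sets borel"
  shows "emeasure (density lborel (\<lambda>x. ennreal (\<Sum>j\<in>bins N. indicator (binset N j) x * c j))) A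
       = ennreal (\<Sum>j\<in>bins N. c j * measure lborel (A \<inter> binset N j))"
proof -
  have [measurable]: "binset N j \<in> sets borel" for j :: "'r \<Rightarrow> nat" using binset_sets[OF N] .
  have "emeasure (density lborel (\<lambda>x. ennreal (\<Sum>j\<in>bins N. indicator (binset N j) x * c j))) A
      = (\<integral>\<^sup>+ x. ennreal (\<Sum>j\<in>bins N. indicator (binset N j) x * c j) * indicator A x \<partial>lborel)"
    by (rule emeasure_density) auto
  also have "\<dots> = (\<integral>\<^sup>+ x. (\<Sum>j\<in>bins N. ennreal (c j) * indicator (A \<inter> binset N j) x) \<partial>lborel)"
  proof (intro nn_integral_cong)
    fix x
    have "(\<Sum>j\<in>bins N. indicator (binset N j) x * c j) * indicator A x
        = (\<Sum>j\<in>bins N. c j * indicator (A \<inter> binset N j) x)"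
      by (auto simp: sum_distrib_right indicator_def intro!: sum.cong)
    hence "ennreal (\<Sum>j\<in>bins N. indicator (binset N j) x * c j) * indicator A x
        = ennreal (\<Sum>j\<in>bins N. c j * indicator (A \<inter> binset N j) x)"
      by (auto simp: indicator_def)
    also have "\<dots> = (\<Sum>j\<in>bins N. ennreal (c j * indicator (A \<inter> binset N j) x))"
      using c by (subst sum_ennreal) auto
    also have "\<dots> = (\<Sum>j\<in>bins N. ennreal (c j) * indicator (A \<inter> binset N j) x)"
      using c by (intro sum.cong refl) (auto simp: indicator_def)
    finally show "ennreal (\<Sum>j\<in>bins N. indicator (binset N j) x * c j) * indicator A x
        = (\<Sum>j\<in>bins N. ennreal (c j) * indicator (A \<inter> binset N j) x)" .
  qed
  also have "\<dots> = (\<Sum>j\<in>bins N. ennreal (c j) * emeasure lborel (A \<inter> binset N j))"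
    by (subst nn_integral_sum) (auto simp: nn_integral_cmult_indicator)
  also have "\<dots> = (\<Sum>j\<in>bins N. ennreal (c j * measure lborel (A \<inter> binset N j)))"
    using c
    by (intro sum.cong refl) (simp add: emeasure_eq_ennreal_measure[OF binset_fin'[OF N]] ennreal_mult)
  also have "\<dots> = ennreal (\<Sum>j\<in>bins N. c j * measure lborel (A \<inter> binset N j))"
    using c by (subst sum_ennreal) auto
  finally show ?thesis .
qed

definition cnt :: "nat \<Rightarrow> nat \<Rightarrow> (nat \<Rightarrow> real^'r::finite) \<Rightarrow> ('r \<Rightarrow> nat) \<Rightarrow> nat" where
  "cnt N n xs j = card {i\<in>{..<n}. xs i \<in> binset N j}"

lemma mem_binset_iff: "N > 0 \<Longrightarrow> x \<in> unit_cube \<Longrightarrow> x \<in> binset N j \<longleftrightarrow> j = bin_idx N x"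
  by (auto simp: binset_def)

lemma priv_density_eq:
  fixes xs :: "nat \<Rightarrow> real^'r::finite"
  assumes N: "N > 0"
  shows "priv_density N n \<delta> xs x = (\<Sum>j\<in>bins N. indicator (binset N j) x *
            ((1 - \<delta>) * (real (cnt N n xs j) / real n * real N ^ CARD('r)) + \<delta>))"
proof (cases "x \<in> unit_cube")
  case True
  let ?j = "bin_idx N x"
  have jb: "?j \<in> bins N" using bin_idx_bins[OF N True] .
  have "(\<Sum>j\<in>bins N. indicator (binset N j) x *
            ((1 - \<delta>) * (real (cnt N n xs j) / real n * real N ^ CARD('r)) + \<delta>))
      = indicator (binset N ?j) x * ((1 - \<delta>) * (real (cnt N n xs ?j) / real n * real N ^ CARD('r)) + \<delta>)"
    by (rule sum.remove[OF finite_bins jb, THEN trans])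
       (auto simp: mem_binset_iff[OF N True] intro!: sum.neutral)
  also have "\<dots> = (1 - \<delta>) * (real (cnt N n xs ?j) / real n * real N ^ CARD('r)) + \<delta>"
    by (simp add: mem_binset_iff[OF N True])
  also have "cnt N n xs ?j = card {i \<in> {..<n}. xs i \<in> unit_cube \<and> bin_idx N (xs i) = bin_idx N x}"
    unfolding cnt_def binset_def by (rule arg_cong[where f=card]) auto
  finally show ?thesis using True by (simp add: priv_density_def hist_def)
next
  case False
  hence "x \<notin> binset N j" for j using binset_cube by blast
  thus ?thesis using False by (simp add: priv_density_def)
qed

lemma cnt_sum:
  assumes "finite J"
  shows "(\<Sum>j\<in>J. cnt N n xs j) = card {i\<in>{..<n}. xs i \<in> (\<Union>j\<in>J. binset N j)}"
proof -
  have "{i\<in>{..<n}. xs i \<in> (\<Union>j\<in>J. binset N j)} = (\<Union>j\<in>J. {i\<in>{..<n}. xs i \<in> binset N j})" by auto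
  moreover have "card (\<Union>j\<in>J. {i\<in>{..<n}. xs i \<in> binset N j}) = (\<Sum>j\<in>J. card {i\<in>{..<n}. xs i \<in> binset N j})"
    using assms by (intro card_UN_disjoint) (auto simp: binset_def)
  ultimately show ?thesis by (simp add: cnt_def)
qed

lemma cnt_sum_all:
  assumes N: "N > 0" and xs: "\<forall>i<n. xs i \<in> unit_cube"
  shows "(\<Sum>j\<in>bins N. cnt N n xs j) = n"
proof -
  have "{i\<in>{..<n}. xs i \<in> (\<Union>j\<in>bins N. binset N j)} = {..<n}"
    using xs cube_Union[OF N] by auto
  thus ?thesis using cnt_sum[OF finite_bins, of N n xs] by simp
qed



lemma P_emeasure:
  assumes p_meas[measurable]: "p \<in> borel_measurable borel" and S[measurable]: "S \<in> sets borel"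
  shows "emeasure (density lborel (\<lambda>x. ennreal (indicator unit_cube x * p x))) S
       = (\<integral>\<^sup>+ x. ennreal (indicator unit_cube x * p x) * indicator S x \<partial>lborel)"
  by (rule emeasure_density) auto

lemma P_bounds:
  fixes p :: "real^'r::finite \<Rightarrow> real"
  assumes p_meas[measurable]: "p \<in> borel_measurable borel"
    and p_nonneg: "\<forall>x\<in>unit_cube. 0 \<le> p x"
    and S[measurable]: "S \<in> sets borel" and Sc: "S \<subseteq> unit_cube"
    and y: "y \<in> unit_cube"
    and om: "\<And>x. x \<in> S \<Longrightarrow> \<bar>p x - p y\<bar> \<le> \<omega>" and om0: "\<omega> \<ge> 0"
  shows "measure (density lborel (\<lambda>x. ennreal (indicator unit_cube x * p x))) S \<le> (p y + \<omega>) * measure lborel S"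
    "(p y - \<omega>) * measure lborel S \<le> measure (density lborel (\<lambda>x. ennreal (indicator unit_cube x * p x))) S"
proof -
  let ?P = "density lborel (\<lambda>x. ennreal (indicator unit_cube x * p x))"
  have Sfin: "emeasure lborel S \<noteq> top"
  proof -
    have "emeasure lborel S \<le> emeasure lborel (unit_cube :: (real^'r) set)"
      using Sc by (intro emeasure_mono) auto
    thus ?thesis using emeasure_unit_cube[where 'r='r] by (metis ennreal_one_neq_top top_unique)
  qed
  have lamS: "emeasure lborel S = ennreal (measure lborel S)" using Sfin by (simp add: emeasure_eq_ennreal_measure)
  have omp: "0 \<le> p y + \<omega>" using om0 y p_nonneg by auto
  have "emeasure ?P S = (\<integral>\<^sup>+ x. ennreal (indicator unit_cube x * p x) * indicator S x \<partial>lborel)"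
    by (rule P_emeasure) auto
  also have "\<dots> \<le> (\<integral>\<^sup>+ x. ennreal (p y + \<omega>) * indicator S x \<partial>lborel)"
  proof (intro nn_integral_mono)
    fix x show "ennreal (indicator unit_cube x * p x) * indicator S x \<le> ennreal (p y + \<omega>) * indicator S x"
    proof (cases "x \<in> S")
      case True
      hence "p x \<le> p y + \<omega>" using om[OF True] by auto
      thus ?thesis using True Sc by (auto simp: indicator_def intro: ennreal_leI)
    qed auto
  qed
  also have "\<dots> = ennreal ((p y + \<omega>) * measure lborel S)"
    using omp by (simp add: nn_integral_cmult_indicator lamS ennreal_mult)
  finally have up: "emeasure ?P S \<le> ennreal ((p y + \<omega>) * measure lborel S)" .
  hence Pfin: "emeasure ?P S \<noteq> top" by (auto simp: top_unique)
  have PS: "emeasure ?P S = ennreal (measure ?P S)" using Pfin by (simp add: emeasure_eq_ennreal_measure)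
  show "measure ?P S \<le> (p y + \<omega>) * measure lborel S"
    using up omp unfolding PS by (simp add: ennreal_le_iff)
  show "(p y - \<omega>) * measure lborel S \<le> measure ?P S"
  proof (cases "p y - \<omega> \<le> 0")
    case True
    hence "(p y - \<omega>) * measure lborel S \<le> 0" by (simp add: mult_nonpos_nonneg)
    thus ?thesis by (smt (verit) measure_nonneg)
  next
    case False
    have "ennreal ((p y - \<omega>) * measure lborel S) = (\<integral>\<^sup>+ x. ennreal (p y - \<omega>) * indicator S x \<partial>lborel)"
      using False by (simp add: nn_integral_cmult_indicator lamS ennreal_mult)
    also have "\<dots> \<le> (\<integral>\<^sup>+ x. ennreal (indicator unit_cube x * p x) * indicator S x \<partial>lborel)"
    proof (intro nn_integral_mono)
      fix x show "ennreal (p y - \<omega>) * indicator S x \<le> ennreal (indicator unit_cube x * p x) * indicator S x"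
      proof (cases "x \<in> S")
        case True
        hence "p y - \<omega> \<le> p x" using om[OF True] by auto
        thus ?thesis using True Sc by (auto simp: indicator_def intro: ennreal_leI)
      qed auto
    qed
    also have "\<dots> = emeasure ?P S" by (rule P_emeasure[symmetric]) auto
    finally show ?thesis unfolding PS using False by (simp add: ennreal_le_iff)
  qed
qed

lemma binset_lip:
  fixes p :: "real^'r::finite \<Rightarrow> real"
  assumes N: "N > 0" and p_lip: "\<forall>x\<in>unit_cube. \<forall>y\<in>unit_cube. \<bar>p x - p y\<bar> \<le> L * norm (x - y)"
    and L: "L \<ge> 0" and x: "x \<in> binset N j" and y: "y \<in> binset N j"
  shows "\<bar>p x - p y\<bar> \<le> L * real CARD('r) / N"
proof -
  have "\<bar>(x - y) $ i\<bar> \<le> 1 / N" for i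
    using binset_coord[OF N x, of i] binset_coord[OF N y, of i]
    by (simp add: abs_le_iff add_divide_distrib)
  hence "norm (x - y) \<le> (\<Sum>i\<in>(UNIV::'r set). 1 / N)"
    using norm_le_l1_cart[of "x - y"] by (meson order_trans sum_mono)
  hence "norm (x - y) \<le> real CARD('r) / N" by simp
  moreover have "x \<in> unit_cube" "y \<in> unit_cube" using x y binset_cube by auto
  ultimately show ?thesis using p_lip L
    by (smt (verit, best) mult_left_mono times_divide_eq_right)
qed

lemma lo_in_binset:
  fixes j :: "'r::finite \<Rightarrow> nat"
  assumes N: "N > 0" and j: "j \<in> bins N"
  shows "(\<chi> i. real (j i) / N) \<in> binset N j"
proof -
  have "real (j i) / N \<in> binint N (j i)" for i
  proof -
    have "j i < N" using j by (auto simp: bins_def)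
    hence "real (j i) + 1 \<le> real N" by linarith
    hence "real (j i) / N \<le> 1" "real (j i) / N < (real (j i) + 1) / N" using N
      by (simp_all add: field_simps)
    thus ?thesis by (auto simp: binint_def)
  qed
  thus ?thesis using binset_eq[OF N j] by auto
qed

lemma bias_bin:
  fixes p :: "real^'r::finite \<Rightarrow> real"
  assumes p_meas[measurable]: "p \<in> borel_measurable borel"
    and p_nonneg: "\<forall>x\<in>unit_cube. 0 \<le> p x"
    and p_lip: "\<forall>x\<in>unit_cube. \<forall>y\<in>unit_cube. \<bar>p x - p y\<bar> \<le> L * norm (x - y)" and L: "L \<ge> 0"
    and N: "N > 0" and j: "j \<in> bins N"
    and S[measurable]: "S \<in> sets borel" and SB: "S \<subseteq> binset N j"
  shows "\<bar>measure (density lborel (\<lambda>x. ennreal (indicator unit_cube x * p x))) S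
        - measure (density lborel (\<lambda>x. ennreal (indicator unit_cube x * p x))) (binset N j) * real N ^ CARD('r) * measure lborel S\<bar>
       \<le> 2 * (L * real CARD('r) / N) * measure lborel S"
proof -
  let ?P = "density lborel (\<lambda>x. ennreal (indicator unit_cube x * p x))"
  define \<omega> where "\<omega> = L * real CARD('r) / N"
  define y :: "real^'r" where "y = (\<chi> i. real (j i) / N)"
  have yB: "y \<in> binset N j" unfolding y_def by (rule lo_in_binset[OF N j])
  have yc: "y \<in> unit_cube" using yB binset_cube by auto
  have om0: "\<omega> \<ge> 0" using L N by (simp add: \<omega>_def)
  have omB: "\<bar>p x - p y\<bar> \<le> \<omega>" if "x \<in> binset N j" for x
    unfolding \<omega>_def by (rule binset_lip[OF N p_lip L that yB])
  have Bm: "binset N j \<in> sets borel" using binset_sets[OF N] .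
  have lamB: "measure lborel (binset N j) = (1 / real N) ^ CARD('r)"
    using emeasure_binset[OF N j] by (simp add: measure_def)
  have Nr: "real N ^ CARD('r) * (1 / real N) ^ CARD('r) = 1" using N
    by (simp add: power_one_over)
  have b1: "measure ?P (binset N j) \<le> (p y + \<omega>) * (1 / real N) ^ CARD('r)"
    using P_bounds(1)[OF p_meas p_nonneg Bm binset_cube yc omB om0] lamB by simp
  have b2: "(p y - \<omega>) * (1 / real N) ^ CARD('r) \<le> measure ?P (binset N j)"
    using P_bounds(2)[OF p_meas p_nonneg Bm binset_cube yc omB om0] lamB by simp
  have Np: "real N ^ CARD('r) > 0" using N by simp
  have a1: "measure ?P (binset N j) * real N ^ CARD('r) \<le> p y + \<omega>"
    using mult_right_mono[OF b1, of "real N ^ CARD('r)"] Np Nr by (simp add: mult_ac)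
  have a2: "p y - \<omega> \<le> measure ?P (binset N j) * real N ^ CARD('r)"
    using mult_right_mono[OF b2, of "real N ^ CARD('r)"] Np Nr by (simp add: mult_ac)
  have Sc: "S \<subseteq> unit_cube" using SB binset_cube by auto
  have s1: "measure ?P S \<le> (p y + \<omega>) * measure lborel S"
    using P_bounds(1)[OF p_meas p_nonneg S Sc yc _ om0] omB SB by auto
  have s2: "(p y - \<omega>) * measure lborel S \<le> measure ?P S"
    using P_bounds(2)[OF p_meas p_nonneg S Sc yc _ om0] omB SB by auto
  have l0: "measure lborel S \<ge> 0" by simp
  have c1: "measure ?P (binset N j) * real N ^ CARD('r) * measure lborel S \<le> (p y + \<omega>) * measure lborel S"
    using mult_right_mono[OF a1 l0] .
  have c2: "(p y - \<omega>) * measure lborel S \<le> measure ?P (binset N j) * real N ^ CARD('r) * measure lborel S"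
    using mult_right_mono[OF a2 l0] .
  show ?thesis unfolding \<omega>_def[symmetric] using s1 s2 c1 c2 by (simp add: algebra_simps abs_le_iff)
qed



lemma card_bins_slice:
  fixes i :: "'r::finite"
  assumes a: "a < N"
  shows "card {j \<in> bins N. j i = a} = N ^ (CARD('r) - 1)"
proof -
  have "{j \<in> bins N. j i = a} = PiE UNIV (\<lambda>l. if l = i then {a} else {..<N})"
    using a by (auto simp: bins_def PiE_def Pi_def split: if_splits)
  hence "card {j \<in> bins N. j i = a} = (\<Prod>l\<in>UNIV. card (if l = i then {a} else {..<N}))"
    by (simp add: card_PiE)
  also have "\<dots> = (\<Prod>l\<in>UNIV - {i}. N)"
    by (subst prod.remove[of UNIV i]) (auto intro!: prod.cong)
  also have "\<dots> = N ^ (CARD('r) - 1)" by (simp add: card_Diff_singleton)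
  finally show ?thesis .
qed

lemma card_partial:
  fixes \<tau> :: "'r::finite \<Rightarrow> nat"
  assumes \<tau>: "\<tau> \<in> bins N"
  shows "card {j \<in> bins N. \<exists>i. j i = \<tau> i} \<le> CARD('r) * N ^ (CARD('r) - 1)"
proof -
  have "{j \<in> bins N. \<exists>i. j i = \<tau> i} = (\<Union>i. {j \<in> bins N. j i = \<tau> i})" by auto
  hence "card {j \<in> bins N. \<exists>i. j i = \<tau> i} \<le> (\<Sum>i\<in>UNIV. card {j \<in> bins N. j i = \<tau> i})"
    by (simp add: card_UN_le)
  also have "\<dots> = (\<Sum>i\<in>(UNIV::'r set). N ^ (CARD('r) - 1))"
    using \<tau> by (intro sum.cong refl card_bins_slice) (auto simp: bins_def)
  finally show ?thesis by simp
qed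

lemma nonpartial:
  fixes t :: "real^'r::finite"
  assumes N: "N > 0" and t: "t \<in> unit_cube" and x: "x \<in> binset N j"
    and np: "\<forall>i. j i \<noteq> bin_idx N t i"
  shows "vle x t \<longleftrightarrow> (\<forall>i. j i < bin_idx N t i)"
proof -
  have tB: "t \<in> binset N (bin_idx N t)" using t by (simp add: binset_def)
  have "x $ i \<le> t $ i \<longleftrightarrow> j i < bin_idx N t i" for i
  proof (cases "j i < bin_idx N t i")
    case True
    have "bin_idx N t i < N" using binset_coord(3)[OF N tB] .
    hence "j i \<noteq> N - 1" using True by linarith
    hence "x $ i < (real (j i) + 1) / N" using binset_coord(4)[OF N x] by auto
    also have "\<dots> \<le> real (bin_idx N t i) / N" using True N by (simp add: divide_right_mono)
    also have "\<dots> \<le> t $ i" using binset_coord(1)[OF N tB] .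
    finally show ?thesis using True by simp
  next
    case False
    hence gt: "bin_idx N t i < j i" using np by (meson linorder_neqE_nat)
    have "j i < N" using binset_coord(3)[OF N x] .
    hence "bin_idx N t i \<noteq> N - 1" using gt by linarith
    hence "t $ i < (real (bin_idx N t i) + 1) / N" using binset_coord(4)[OF N tB] by auto
    also have "\<dots> \<le> real (j i) / N" using gt N by (simp add: divide_right_mono)
    also have "\<dots> \<le> x $ i" using binset_coord(1)[OF N x] .
    finally show ?thesis using False by simp
  qed
  thus ?thesis by (simp add: vle_def)
qed

lemma vle_sets[measurable]: "{x::real^'r::finite. vle x t} \<in> sets borel"
proof -
  have "{x::real^'r. vle x t} = {x. \<forall>i. x $ i \<le> t $ i}" by (simp add: vle_def)
  also have "\<dots> \<in> sets borel" by measurable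
  finally show ?thesis .
qed

lemma P_decomp:
  fixes p :: "real^'r::finite \<Rightarrow> real"
  assumes p_meas[measurable]: "p \<in> borel_measurable borel"
    and P_prob: "prob_space (density lborel (\<lambda>x. ennreal (indicator unit_cube x * p x)))"
    and N: "N > 0" and A[measurable]: "A \<in> sets borel"
  shows "measure (density lborel (\<lambda>x. ennreal (indicator unit_cube x * p x))) A
       = (\<Sum>j\<in>bins N. measure (density lborel (\<lambda>x. ennreal (indicator unit_cube x * p x))) (A \<inter> binset N j))"
proof -
  let ?P = "density lborel (\<lambda>x. ennreal (indicator unit_cube x * p x))"
  interpret PP: prob_space ?P by (rule P_prob)
  have [measurable]: "binset N j \<in> sets borel" for j :: "'r \<Rightarrow> nat" using binset_sets[OF N] .
  have ae: "AE x in ?P. x \<in> unit_cube"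
    by (subst AE_density) (auto simp: indicator_def)
  have "measure ?P A = measure ?P (A \<inter> unit_cube)"
    by (rule measure_eq_AE) (use ae in auto)
  also have "A \<inter> unit_cube = (\<Union>j\<in>bins N. A \<inter> binset N j)"
    using cube_Union[OF N] by auto
  also have "measure ?P \<dots> = (\<Sum>j\<in>bins N. measure ?P (A \<inter> binset N j))"
  proof -
    have "disjoint_family_on (\<lambda>j. A \<inter> binset N j) (bins N)"
      by (auto simp: disjoint_family_on_def binset_def)
    thus ?thesis by (intro measure_finite_Union finite_bins) (auto simp: PP.emeasure_finite)
  qed
  finally show ?thesis .
qed

lemma bias_total:
  fixes p :: "real^'r::finite \<Rightarrow> real"
  assumes p_meas[measurable]: "p \<in> borel_measurable borel"
    and p_nonneg: "\<forall>x\<in>unit_cube. 0 \<le> p x"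
    and P_prob: "prob_space (density lborel (\<lambda>x. ennreal (indicator unit_cube x * p x)))"
    and p_lip: "\<forall>x\<in>unit_cube. \<forall>y\<in>unit_cube. \<bar>p x - p y\<bar> \<le> L * norm (x - y)" and L: "L \<ge> 0"
    and N: "N > 0" and t: "t \<in> unit_cube"
  shows "\<bar>cdf_vec (density lborel (\<lambda>x. ennreal (indicator unit_cube x * p x))) t
     - (\<Sum>j\<in>bins N. measure (density lborel (\<lambda>x. ennreal (indicator unit_cube x * p x))) (binset N j)
           * real N ^ CARD('r) * measure lborel ({x. vle x t} \<inter> binset N j))\<bar>
     \<le> 2 * L * real CARD('r) ^ 2 / real N ^ 2"
proof -
  let ?P = "density lborel (\<lambda>x. ennreal (indicator unit_cube x * p x))"
  let ?A = "{x::real^'r. vle x t}"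
  let ?\<tau> = "bin_idx N t"
  define \<omega> where "\<omega> = L * real CARD('r) / N"
  have [measurable]: "binset N j \<in> sets borel" for j :: "'r \<Rightarrow> nat" using binset_sets[OF N] .
  define d where "d j = measure ?P (?A \<inter> binset N j) - measure ?P (binset N j) * real N ^ CARD('r) * measure lborel (?A \<inter> binset N j)" for j
  have F: "cdf_vec ?P t = (\<Sum>j\<in>bins N. measure ?P (?A \<inter> binset N j))"
    unfolding cdf_vec_def using P_decomp[OF p_meas P_prob N vle_sets] by simp
  have diff: "cdf_vec ?P t - (\<Sum>j\<in>bins N. measure ?P (binset N j) * real N ^ CARD('r) * measure lborel (?A \<inter> binset N j))
     = (\<Sum>j\<in>bins N. d j)"
    unfolding F d_def by (simp add: sum_subtractf)
  have lamB: "measure lborel (binset N j) = (1 / real N) ^ CARD('r)" if "j \<in> bins N" for j :: "'r \<Rightarrow> nat"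
    using emeasure_binset[OF N that] by (simp add: measure_def)
  have Nr: "real N ^ CARD('r) * (1 / real N) ^ CARD('r) = 1" using N
    by (simp add: power_one_over)
  have d0: "d j = 0" if j: "j \<in> bins N" and np: "\<forall>i. j i \<noteq> ?\<tau> i" for j
  proof (cases "\<forall>i. j i < ?\<tau> i")
    case True
    hence "?A \<inter> binset N j = binset N j" using nonpartial[OF N t _ np] by auto
    thus ?thesis unfolding d_def using lamB[OF j] Nr by (simp add: mult.assoc)
  next
    case False
    hence "?A \<inter> binset N j = {}" using nonpartial[OF N t _ np] by auto
    thus ?thesis unfolding d_def by simp
  qed
  have dle: "\<bar>d j\<bar> \<le> 2 * \<omega> * (1 / real N) ^ CARD('r)" if j: "j \<in> bins N" for j
  proof -
    have "\<bar>d j\<bar> \<le> 2 * \<omega> * measure lborel (?A \<inter> binset N j)"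
      unfolding d_def \<omega>_def by (rule bias_bin[OF p_meas p_nonneg p_lip L N j]) auto
    also have "\<dots> \<le> 2 * \<omega> * measure lborel (binset N j)"
    proof (rule mult_left_mono)
      show "measure lborel (?A \<inter> binset N j) \<le> measure lborel (binset N j)"
        by (intro measure_mono_fmeasurable) (auto simp: fmeasurable_def emeasure_binset[OF N j])
      show "0 \<le> 2 * \<omega>" using L N by (simp add: \<omega>_def)
    qed
    finally show ?thesis using lamB[OF j] by simp
  qed
  have "\<bar>\<Sum>j\<in>bins N. d j\<bar> \<le> (\<Sum>j\<in>bins N. \<bar>d j\<bar>)" by (rule sum_abs)
  also have "\<dots> = (\<Sum>j\<in>{j\<in>bins N. \<exists>i. j i = ?\<tau> i}. \<bar>d j\<bar>)"
    using d0 by (intro sum.mono_neutral_right finite_bins) auto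
  also have "\<dots> \<le> (\<Sum>j\<in>{j\<in>bins N. \<exists>i. j i = ?\<tau> i}. 2 * \<omega> * (1 / real N) ^ CARD('r))"
    using dle by (intro sum_mono) auto
  also have "\<dots> = real (card {j\<in>bins N. \<exists>i. j i = ?\<tau> i}) * (2 * \<omega> * (1 / real N) ^ CARD('r))" by simp
  also have "\<dots> \<le> real (CARD('r) * N ^ (CARD('r) - 1)) * (2 * \<omega> * (1 / real N) ^ CARD('r))"
  proof (rule mult_right_mono)
    show "real (card {j\<in>bins N. \<exists>i. j i = ?\<tau> i}) \<le> real (CARD('r) * N ^ (CARD('r) - 1))"
      using card_partial[OF bin_idx_bins[OF N t]] by (rule of_nat_mono)
    show "0 \<le> 2 * \<omega> * (1 / real N) ^ CARD('r)" using L N by (simp add: \<omega>_def)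
  qed
  also have "\<dots> = 2 * L * real CARD('r) ^ 2 / real N ^ 2"
  proof -
    define K where "K = real N ^ (CARD('r) - 1)"
    have K: "real N ^ CARD('r) = K * real N" unfolding K_def
      using power_minus_mult[of "CARD('r)" "real N"] by simp
    have Kp: "K > 0" using N by (simp add: K_def)
    have "real (CARD('r) * N ^ (CARD('r) - 1)) * (2 * \<omega> * (1 / real N) ^ CARD('r))
        = real CARD('r) * K * (2 * (L * real CARD('r) / real N) * (1 / (K * real N)))"
    proof -
      have e1: "real (CARD('r) * N ^ (CARD('r) - 1)) = real CARD('r) * K" by (simp add: K_def)
      have e2: "(1 / real N) ^ CARD('r) = 1 / (K * real N)" by (simp only: power_one_over K)
      show ?thesis unfolding e1 e2 \<omega>_def by simp
    qed
    also have "\<dots> = 2 * L * real CARD('r) ^ 2 / real N ^ 2"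
      using Kp N by (simp add: power2_eq_square)
    finally show ?thesis .
  qed
  finally show ?thesis unfolding diff .
qed



definition Qm :: "nat \<Rightarrow> nat \<Rightarrow> real \<Rightarrow> (nat \<Rightarrow> real^'r::finite) \<Rightarrow> (real^'r) measure" where
  "Qm N n \<delta> xs = density lborel (\<lambda>z. ennreal (priv_density N n \<delta> xs z))"

definition cq :: "nat \<Rightarrow> nat \<Rightarrow> real \<Rightarrow> (nat \<Rightarrow> real^'r::finite) \<Rightarrow> ('r \<Rightarrow> nat) \<Rightarrow> real" where
  "cq N n \<delta> xs j = (1 - \<delta>) * (real (cnt N n xs j) / real n * real N ^ CARD('r)) + \<delta>"

lemma cq_nonneg: "0 \<le> \<delta> \<Longrightarrow> \<delta> \<le> 1 \<Longrightarrow> cq N n \<delta> xs j \<ge> 0"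
  by (simp add: cq_def)

lemma Qm_emeasure:
  fixes xs :: "nat \<Rightarrow> real^'r::finite"
  assumes N: "N > 0" and d0: "0 \<le> \<delta>" and d1: "\<delta> \<le> 1" and A: "A \<in> sets borel"
  shows "emeasure (Qm N n \<delta> xs) A = ennreal (\<Sum>j\<in>bins N. cq N n \<delta> xs j * measure lborel (A \<inter> binset N j))"
proof -
  have "Qm N n \<delta> xs = density lborel (\<lambda>x. ennreal (\<Sum>j\<in>bins N. indicator (binset N j) x * cq N n \<delta> xs j))"
    unfolding Qm_def cq_def by (simp add: priv_density_eq[OF N])
  thus ?thesis using pc_emeasure[OF N cq_nonneg[OF d0 d1] A] by simp
qed

lemma sets_Qm[simp]: "sets (Qm N n \<delta> xs) = sets borel"
  by (simp add: Qm_def)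

lemma space_Qm[simp]: "space (Qm N n \<delta> xs) = UNIV"
  by (simp add: Qm_def)

lemma lam_le:
  fixes j :: "'r::finite \<Rightarrow> nat"
  assumes N: "N > 0" and j: "j \<in> bins N" and A: "A \<in> sets borel"
  shows "measure lborel (A \<inter> binset N j) \<le> (1 / real N) ^ CARD('r)"
proof -
  have "measure lborel (A \<inter> binset N j) \<le> measure lborel (binset N j)"
    using A binset_sets[OF N, of j]
    by (intro measure_mono_fmeasurable) (auto simp: fmeasurable_def emeasure_binset[OF N j])
  thus ?thesis using emeasure_binset[OF N j] by (simp add: measure_def)
qed

lemma Nr_lam_le:
  fixes j :: "'r::finite \<Rightarrow> nat"
  assumes N: "N > 0" and j: "j \<in> bins N" and A: "A \<in> sets borel"
  shows "real N ^ CARD('r) * measure lborel (A \<inter> binset N j) \<le> 1"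
proof -
  have "real N ^ CARD('r) * measure lborel (A \<inter> binset N j) \<le> real N ^ CARD('r) * (1 / real N) ^ CARD('r)"
    using lam_le[OF N j A] by (intro mult_left_mono) auto
  also have "\<dots> = 1" using N by (simp add: power_one_over)
  finally show ?thesis .
qed

lemma Qm_prob:
  fixes xs :: "nat \<Rightarrow> real^'r::finite"
  assumes N: "N > 0" and n: "n > 0" and d0: "0 \<le> \<delta>" and d1: "\<delta> \<le> 1"
    and xs: "\<forall>i<n. xs i \<in> unit_cube"
  shows "prob_space (Qm N n \<delta> xs)"
proof
  have lamB: "measure lborel (UNIV \<inter> binset N j) = (1 / real N) ^ CARD('r)" if "j \<in> bins N" for j :: "'r \<Rightarrow> nat"
    using emeasure_binset[OF N that] by (simp add: measure_def)
  have Nr: "real N ^ CARD('r) * (1 / real N) ^ CARD('r) = 1" using N by (simp add: power_one_over)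
  have "(\<Sum>j\<in>bins N. cq N n \<delta> xs j * measure lborel (UNIV \<inter> binset N j))
      = (\<Sum>j\<in>bins N. (1 - \<delta>) * (real (cnt N n xs j) / real n) + \<delta> * (1 / real N) ^ CARD('r))"
  proof (intro sum.cong refl)
    fix j :: "'r \<Rightarrow> nat" assume j: "j \<in> bins N"
    have g: "((1-d)*(c*Y)+d)*X = (1-d)*c*(Y*X) + d*X" for d c X Y :: real by (simp add: algebra_simps)
    show "cq N n \<delta> xs j * measure lborel (UNIV \<inter> binset N j)
      = (1 - \<delta>) * (real (cnt N n xs j) / real n) + \<delta> * (1 / real N) ^ CARD('r)"
      unfolding cq_def lamB[OF j] g Nr by simp
  qed
  also have "\<dots> = (1 - \<delta>) * (real (\<Sum>j\<in>bins N. cnt N n xs j) / real n) + \<delta> * (real (card (bins N :: ('r \<Rightarrow> nat) set)) * (1 / real N) ^ CARD('r))"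
    by (simp add: sum.distrib sum_distrib_left sum_divide_distrib)
  also have "\<dots> = 1"
    using cnt_sum_all[OF N xs] n Nr by (simp add: card_bins)
  finally have "emeasure (Qm N n \<delta> xs) UNIV = 1"
    using Qm_emeasure[OF N d0 d1, of UNIV n xs] by simp
  thus "emeasure (Qm N n \<delta> xs) (space (Qm N n \<delta> xs)) = 1" by simp
qed

lemma cdf_Qm:
  fixes xs :: "nat \<Rightarrow> real^'r::finite"
  assumes N: "N > 0" and d0: "0 \<le> \<delta>" and d1: "\<delta> \<le> 1"
  shows "cdf_vec (Qm N n \<delta> xs) t = (\<Sum>j\<in>bins N. cq N n \<delta> xs j * measure lborel ({x. vle x t} \<inter> binset N j))"
proof -
  have "(\<Sum>j\<in>bins N. cq N n \<delta> xs j * measure lborel ({x. vle x t} \<inter> binset N j)) \<ge> 0"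
    by (intro sum_nonneg mult_nonneg_nonneg cq_nonneg[OF d0 d1]) auto
  thus ?thesis unfolding cdf_vec_def
    using Qm_emeasure[OF N d0 d1 vle_sets, of n xs t] by (simp add: measure_def)
qed

definition dX :: "(real^'r::finite) measure \<Rightarrow> nat \<Rightarrow> nat \<Rightarrow> (nat \<Rightarrow> real^'r) \<Rightarrow> real" where
  "dX P N n xs = (\<Sum>j\<in>bins N. \<bar>measure P (binset N j) - real (cnt N n xs j) / real n\<bar>)"

lemma FG_bound:
  fixes p :: "real^'r::finite \<Rightarrow> real" and xs :: "nat \<Rightarrow> real^'r"
  assumes p_meas[measurable]: "p \<in> borel_measurable borel"
    and p_nonneg: "\<forall>x\<in>unit_cube. 0 \<le> p x"
    and P_prob: "prob_space (density lborel (\<lambda>x. ennreal (indicator unit_cube x * p x)))"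
    and p_lip: "\<forall>x\<in>unit_cube. \<forall>y\<in>unit_cube. \<bar>p x - p y\<bar> \<le> L * norm (x - y)" and L: "L \<ge> 0"
    and N: "N > 0" and n: "n > 0" and d0: "0 \<le> \<delta>" and d1: "\<delta> \<le> 1"
    and xs: "\<forall>i<n. xs i \<in> unit_cube" and t: "t \<in> unit_cube"
  shows "\<bar>cdf_vec (density lborel (\<lambda>x. ennreal (indicator unit_cube x * p x))) t - cdf_vec (Qm N n \<delta> xs) t\<bar>
     \<le> 2 * L * real CARD('r) ^ 2 / real N ^ 2 + dX (density lborel (\<lambda>x. ennreal (indicator unit_cube x * p x))) N n xs + \<delta>"
proof -
  let ?P = "density lborel (\<lambda>x. ennreal (indicator unit_cube x * p x))"
  let ?A = "{x::real^'r. vle x t}"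
  define lam where "lam j = measure lborel (?A \<inter> binset N j)" for j
  define pi where "pi j = measure ?P (binset N j)" for j
  define h where "h j = real (cnt N n xs j) / real n" for j
  define Y where "Y = real N ^ CARD('r)"
  have lam0: "lam j \<ge> 0" for j by (simp add: lam_def)
  have Ylam: "Y * lam j \<le> 1" if "j \<in> bins N" for j
    unfolding Y_def lam_def by (rule Nr_lam_le[OF N that vle_sets])
  have Y0: "Y \<ge> 0" by (simp add: Y_def)
  have h0: "h j \<ge> 0" for j by (simp add: h_def)
  have sumh: "(\<Sum>j\<in>bins N. h j) = 1"
  proof -
    have "(\<Sum>j\<in>bins N. real (cnt N n xs j)) = real n"
      using cnt_sum_all[OF N xs] by (metis of_nat_sum)
    thus ?thesis using n by (simp add: h_def sum_divide_distrib[symmetric])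
  qed
  have G: "cdf_vec (Qm N n \<delta> xs) t = (\<Sum>j\<in>bins N. ((1 - \<delta>) * (h j * Y) + \<delta>) * lam j)"
    unfolding cdf_Qm[OF N d0 d1] cq_def h_def Y_def lam_def ..
  define Fb where "Fb = (\<Sum>j\<in>bins N. pi j * Y * lam j)"
  have bias: "\<bar>cdf_vec ?P t - Fb\<bar> \<le> 2 * L * real CARD('r) ^ 2 / real N ^ 2"
    unfolding Fb_def pi_def Y_def lam_def by (rule bias_total[OF p_meas p_nonneg P_prob p_lip L N t])
  have eq: "Fb - cdf_vec (Qm N n \<delta> xs) t = (\<Sum>j\<in>bins N. (pi j - h j) * (Y * lam j)) + \<delta> * ((\<Sum>j\<in>bins N. h j * (Y * lam j)) - (\<Sum>j\<in>bins N. lam j))"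
  proof -
    have "Fb - cdf_vec (Qm N n \<delta> xs) t = (\<Sum>j\<in>bins N. pi j * Y * lam j - ((1 - \<delta>) * (h j * Y) + \<delta>) * lam j)"
      unfolding G Fb_def by (simp add: sum_subtractf)
    also have "\<dots> = (\<Sum>j\<in>bins N. (pi j - h j) * (Y * lam j) + \<delta> * (h j * (Y * lam j) - lam j))"
      by (intro sum.cong refl) (simp add: algebra_simps)
    also have "\<dots> = (\<Sum>j\<in>bins N. (pi j - h j) * (Y * lam j)) + \<delta> * ((\<Sum>j\<in>bins N. h j * (Y * lam j)) - (\<Sum>j\<in>bins N. lam j))"
      by (simp add: sum.distrib sum_distrib_left[symmetric] sum_subtractf)
    finally show ?thesis .
  qed
  have t1: "\<bar>\<Sum>j\<in>bins N. (pi j - h j) * (Y * lam j)\<bar> \<le> dX ?P N n xs"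
  proof -
    have "\<bar>\<Sum>j\<in>bins N. (pi j - h j) * (Y * lam j)\<bar> \<le> (\<Sum>j\<in>bins N. \<bar>(pi j - h j) * (Y * lam j)\<bar>)"
      by (rule sum_abs)
    also have "\<dots> \<le> (\<Sum>j\<in>bins N. \<bar>pi j - h j\<bar>)"
    proof (intro sum_mono)
      fix j :: "'r \<Rightarrow> nat" assume j: "j \<in> bins N"
      have "\<bar>(pi j - h j) * (Y * lam j)\<bar> = \<bar>pi j - h j\<bar> * (Y * lam j)"
        using Y0 lam0 by (simp add: abs_mult)
      also have "\<dots> \<le> \<bar>pi j - h j\<bar> * 1" using Ylam[OF j] by (intro mult_left_mono) auto
      finally show "\<bar>(pi j - h j) * (Y * lam j)\<bar> \<le> \<bar>pi j - h j\<bar>" by simp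
    qed
    finally show ?thesis by (simp add: dX_def pi_def h_def)
  qed
  have H: "0 \<le> (\<Sum>j\<in>bins N. h j * (Y * lam j))" "(\<Sum>j\<in>bins N. h j * (Y * lam j)) \<le> 1"
  proof -
    show "0 \<le> (\<Sum>j\<in>bins N. h j * (Y * lam j))" using h0 Y0 lam0 by (intro sum_nonneg) auto
    have "(\<Sum>j\<in>bins N. h j * (Y * lam j)) \<le> (\<Sum>j\<in>bins N. h j * 1)"
      using h0 Ylam by (intro sum_mono mult_left_mono) auto
    thus "(\<Sum>j\<in>bins N. h j * (Y * lam j)) \<le> 1" using sumh by simp
  qed
  have U: "0 \<le> (\<Sum>j\<in>bins N. lam j)" "(\<Sum>j\<in>bins N. lam j) \<le> 1"
  proof -
    show "0 \<le> (\<Sum>j\<in>bins N. lam j)" using lam0 by (intro sum_nonneg) auto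
    have "(\<Sum>j\<in>bins N. lam j) \<le> (\<Sum>j\<in>(bins N :: ('r \<Rightarrow> nat) set). (1 / real N) ^ CARD('r))"
      unfolding lam_def by (intro sum_mono lam_le[OF N _ vle_sets])
    also have "\<dots> = 1" using N by (simp add: card_bins power_one_over)
    finally show "(\<Sum>j\<in>bins N. lam j) \<le> 1" .
  qed
  have t2: "\<bar>\<delta> * ((\<Sum>j\<in>bins N. h j * (Y * lam j)) - (\<Sum>j\<in>bins N. lam j))\<bar> \<le> \<delta>"
  proof -
    have "\<bar>(\<Sum>j\<in>bins N. h j * (Y * lam j)) - (\<Sum>j\<in>bins N. lam j)\<bar> \<le> 1" using H U by linarith
    hence "\<delta> * \<bar>(\<Sum>j\<in>bins N. h j * (Y * lam j)) - (\<Sum>j\<in>bins N. lam j)\<bar> \<le> \<delta> * 1"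
      using d0 by (intro mult_left_mono) auto
    thus ?thesis using d0 by (simp add: abs_mult)
  qed
  show ?thesis using bias eq t1 t2 by linarith
qed



definition grid :: "nat \<Rightarrow> (real^'r::finite) set" where
  "grid M = (\<lambda>g. \<chi> i. real (g i) / real M) ` (PiE UNIV (\<lambda>_. {..M}))"

lemma finite_grid: "finite (grid M)"
  by (auto simp: grid_def intro!: finite_PiE)

lemma card_grid: "card (grid M :: (real^'r::finite) set) \<le> Suc M ^ CARD('r)"
proof -
  have "card (grid M :: (real^'r) set) \<le> card (PiE (UNIV::'r set) (\<lambda>_. {..M}))"
    unfolding grid_def by (intro card_image_le finite_PiE) auto
  also have "\<dots> = Suc M ^ CARD('r)" by (simp add: card_PiE)
  finally show ?thesis .
qed

lemma ecdf_mono: "vle s t \<Longrightarrow> ecdf_vec k zs s \<le> ecdf_vec k zs t"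
proof -
  assume st: "vle s t"
  have "{i\<in>{..<k}. vle (zs i) s} \<subseteq> {i\<in>{..<k}. vle (zs i) t}"
    using st by (auto simp: vle_def intro: order_trans)
  hence "card {i\<in>{..<k}. vle (zs i) s} \<le> card {i\<in>{..<k}. vle (zs i) t}"
    by (intro card_mono) auto
  thus ?thesis by (simp add: ecdf_vec_def divide_right_mono)
qed

lemma grid_approx:
  fixes Q :: "(real^'r::finite) measure"
  assumes Q: "prob_space Q" and sQ: "sets Q = sets borel"
    and slab: "\<And>i a b. 0 \<le> a \<Longrightarrow> a \<le> b \<Longrightarrow> b \<le> 1 \<Longrightarrow> measure Q {x. a < x $ i \<and> x $ i \<le> b} \<le> D * (b - a)"
    and M: "M > 0" and D: "D \<ge> 0"
    and close: "\<forall>g\<in>grid M. \<bar>measure Q {x. vle x g} - ecdf_vec k zs g\<bar> < \<epsilon>"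
    and t: "t \<in> unit_cube"
  shows "\<bar>measure Q {x. vle x t} - ecdf_vec k zs t\<bar> \<le> \<epsilon> + real CARD('r) * D / real M"
proof -
  interpret QQ: prob_space Q by (rule Q)
  have vs: "{x::real^'r. vle x s} \<in> sets Q" for s using sQ vle_sets by auto
  have slab_sets: "{x::real^'r. a < x $ i \<and> x $ i \<le> b} \<in> sets Q" for a b i
  proof -
    have "{x::real^'r. a < x $ i \<and> x $ i \<le> b} \<in> sets borel" by measurable
    thus ?thesis using sQ by simp
  qed
  define gp :: "real^'r" where "gp = (\<chi> i. real (nat \<lceil>real M * t $ i\<rceil>) / real M)"
  define gm :: "real^'r" where "gm = (\<chi> i. real (nat \<lfloor>real M * t $ i\<rfloor>) / real M)"
  have t01: "0 \<le> t $ i" "t $ i \<le> 1" for i using t by (auto simp: unit_cube_def)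
  have Mt: "0 \<le> real M * t $ i" "real M * t $ i \<le> real M" for i
    using t01[of i] M by (auto simp: mult_le_cancel_left1)
  have cp: "real (nat \<lceil>real M * t $ i\<rceil>) = real_of_int \<lceil>real M * t $ i\<rceil>" for i
    using Mt[of i] by (simp add: ceiling_le_zero)
  have cm: "real (nat \<lfloor>real M * t $ i\<rfloor>) = real_of_int \<lfloor>real M * t $ i\<rfloor>" for i
    using Mt[of i] by simp
  have gp_grid: "gp \<in> grid M"
  proof -
    have "nat \<lceil>real M * t $ i\<rceil> \<le> M" for i using Mt[of i]
      by (metis ceiling_le_iff ceiling_of_nat nat_le_iff of_int_of_nat_eq)
    thus ?thesis unfolding grid_def gp_def by (intro image_eqI[of _ _ "\<lambda>i. nat \<lceil>real M * t $ i\<rceil>"]) auto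
  qed
  have gm_grid: "gm \<in> grid M"
  proof -
    have "nat \<lfloor>real M * t $ i\<rfloor> \<le> M" for i using Mt[of i]
      by (metis floor_le_iff floor_of_nat nat_le_iff of_int_of_nat_eq le_floor_iff less_floor_iff
          floor_mono zle_int)
    thus ?thesis unfolding grid_def gm_def by (intro image_eqI[of _ _ "\<lambda>i. nat \<lfloor>real M * t $ i\<rfloor>"]) auto
  qed
  have tgp: "t $ i \<le> gp $ i" for i
  proof -
    have "real M * t $ i \<le> real_of_int \<lceil>real M * t $ i\<rceil>" by (rule le_of_int_ceiling)
    thus ?thesis using M by (simp add: gp_def cp field_simps)
  qed
  have gmt: "gm $ i \<le> t $ i" for i
  proof -
    have "real_of_int \<lfloor>real M * t $ i\<rfloor> \<le> real M * t $ i" by (rule of_int_floor_le)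
    thus ?thesis using M by (simp add: gm_def cm field_simps)
  qed
  have gap: "gp $ i \<le> gm $ i + 1 / real M" for i
  proof -
    have "real_of_int \<lceil>real M * t $ i\<rceil> \<le> real_of_int \<lfloor>real M * t $ i\<rfloor> + 1"
    proof -
      have "\<lceil>real M * t $ i\<rceil> \<le> \<lfloor>real M * t $ i\<rfloor> + 1"
        unfolding ceiling_le_iff using floor_correct[of "real M * t $ i"] by simp
      thus ?thesis by linarith
    qed
    thus ?thesis using M by (simp add: gp_def gm_def cp cm field_simps)
  qed
  have gm0: "0 \<le> gm $ i" for i using M by (simp add: gm_def)
  have gp1: "gp $ i \<le> 1" for i
    using gp_grid M by (auto simp: grid_def)
  have incl: "{x. vle x gp} \<subseteq> {x. vle x gm} \<union> (\<Union>i. {x. gm $ i < x $ i \<and> x $ i \<le> gp $ i})"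
    by (auto simp: vle_def not_le)
  have u1: "measure Q {x. vle x gp} \<le> measure Q ({x. vle x gm} \<union> (\<Union>i. {x. gm $ i < x $ i \<and> x $ i \<le> gp $ i}))"
    using incl slab_sets vs by (intro QQ.finite_measure_mono) auto
  have u2: "measure Q ({x. vle x gm} \<union> (\<Union>i. {x. gm $ i < x $ i \<and> x $ i \<le> gp $ i})) \<le> measure Q {x. vle x gm} + measure Q (\<Union>i. {x. gm $ i < x $ i \<and> x $ i \<le> gp $ i})"
    using slab_sets vs by (intro measure_Un_le) auto
  have "measure Q (\<Union>i. {x. gm $ i < x $ i \<and> x $ i \<le> gp $ i}) \<le> (\<Sum>i\<in>UNIV. measure Q {x. gm $ i < x $ i \<and> x $ i \<le> gp $ i})"
    using slab_sets by (intro measure_UNION_le) auto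
  also have "\<dots> \<le> (\<Sum>i\<in>(UNIV::'r set). D * (1 / real M))"
  proof (intro sum_mono)
    fix i
    have "measure Q {x. gm $ i < x $ i \<and> x $ i \<le> gp $ i} \<le> D * (gp $ i - gm $ i)"
      using slab[OF gm0 _ gp1] gmt tgp order_trans by blast
    also have "\<dots> \<le> D * (1 / real M)" using gap[of i] D by (intro mult_left_mono) auto
    finally show "measure Q {x. gm $ i < x $ i \<and> x $ i \<le> gp $ i} \<le> D * (1 / real M)" .
  qed
  also have "\<dots> = real CARD('r) * D / real M" by simp
  finally have u3: "measure Q (\<Union>i. {x. gm $ i < x $ i \<and> x $ i \<le> gp $ i}) \<le> real CARD('r) * D / real M" .
  have Gdiff: "measure Q {x. vle x gp} \<le> measure Q {x. vle x gm} + real CARD('r) * D / real M"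
    using u1 u2 u3 by linarith
  have Gm1: "measure Q {x. vle x gm} \<le> measure Q {x. vle x t}"
    using gmt by (intro QQ.finite_measure_mono[OF _ vs]) (auto simp: vle_def intro: order_trans)
  have Gm2: "measure Q {x. vle x t} \<le> measure Q {x. vle x gp}"
    using tgp by (intro QQ.finite_measure_mono[OF _ vs]) (auto simp: vle_def intro: order_trans)
  have E1: "ecdf_vec k zs gm \<le> ecdf_vec k zs t" using gmt by (intro ecdf_mono) (simp add: vle_def)
  have E2: "ecdf_vec k zs t \<le> ecdf_vec k zs gp" using tgp by (intro ecdf_mono) (simp add: vle_def)
  have c1: "\<bar>measure Q {x. vle x gp} - ecdf_vec k zs gp\<bar> < \<epsilon>" using close gp_grid by auto
  have c2: "\<bar>measure Q {x. vle x gm} - ecdf_vec k zs gm\<bar> < \<epsilon>" using close gm_grid by auto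
  show ?thesis using Gdiff Gm1 Gm2 E1 E2 c1 c2 by (simp add: abs_le_iff) linarith
qed

lemma cnt_le: "cnt N n xs j \<le> n"
proof -
  have "cnt N n xs j \<le> card {..<n}" unfolding cnt_def by (intro card_mono) auto
  thus ?thesis by simp
qed

lemma cq_le:
  fixes xs :: "nat \<Rightarrow> real^'r::finite"
  assumes N: "N > 0" and n: "n > 0" and d0: "0 \<le> \<delta>" and d1: "\<delta> \<le> 1"
  shows "cq N n \<delta> xs j \<le> real N ^ CARD('r) + 1"
proof -
  have "real (cnt N n xs j) / real n \<le> 1" using cnt_le[of N n xs j] n by simp
  hence "real (cnt N n xs j) / real n * real N ^ CARD('r) \<le> 1 * real N ^ CARD('r)"
    by (intro mult_right_mono) auto
  hence "(1 - \<delta>) * (real (cnt N n xs j) / real n * real N ^ CARD('r)) \<le> (1 - \<delta>) * real N ^ CARD('r)"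
    using d1 by (intro mult_left_mono) auto
  also have "\<dots> \<le> real N ^ CARD('r)" using d0 by (simp add: algebra_simps)
  finally show ?thesis using d1 unfolding cq_def by linarith
qed

lemma lam_sum_cube:
  fixes S :: "(real^'r::finite) set"
  assumes N: "N > 0" and S: "S \<in> sets borel"
  shows "(\<Sum>j\<in>bins N. measure lborel (S \<inter> binset N j)) = measure lborel (S \<inter> unit_cube)"
proof -
  have "S \<inter> unit_cube = (\<Union>j\<in>bins N. S \<inter> binset N j)" using cube_Union[OF N] by auto
  moreover have "measure lborel (\<Union>j\<in>bins N. S \<inter> binset N j) = (\<Sum>j\<in>bins N. measure lborel (S \<inter> binset N j))"
  proof (intro measure_finite_Union finite_bins)
    show "disjoint_family_on (\<lambda>j. S \<inter> binset N j) (bins N)"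
      by (auto simp: disjoint_family_on_def binset_def)
    show "(\<lambda>j. S \<inter> binset N j) ` bins N \<subseteq> sets lborel" using S binset_sets[OF N] by auto
    show "emeasure lborel (S \<inter> binset N j) \<noteq> \<infinity>" for j using binset_fin'[OF N, of S j] by simp
  qed
  ultimately show ?thesis by simp
qed

lemma slab_cube:
  fixes i :: "'r::finite"
  assumes "0 \<le> a" "a \<le> b" "b \<le> 1"
  shows "measure lborel ({x::real^'r. a < x $ i \<and> x $ i \<le> b} \<inter> unit_cube) \<le> b - a"
proof -
  define lo :: "real^'r" where "lo = (\<chi> l. if l = i then a else 0)"
  define hi :: "real^'r" where "hi = (\<chi> l. if l = i then b else 1)"
  have le: "lo $ l \<le> hi $ l" for l using assms by (simp add: lo_def hi_def)
  have sub: "{x::real^'r. a < x $ i \<and> x $ i \<le> b} \<inter> unit_cube \<subseteq> cbox lo hi"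
    by (auto simp: mem_box_cart lo_def hi_def unit_cube_def)
  have pr: "(\<Prod>l\<in>UNIV. hi $ l - lo $ l) = b - a"
    by (simp add: lo_def hi_def if_distrib prod.delta cong: if_cong)
  have "emeasure lborel ({x::real^'r. a < x $ i \<and> x $ i \<le> b} \<inter> unit_cube) \<le> emeasure lborel (cbox lo hi)"
    by (rule emeasure_mono[OF sub]) simp
  also have "\<dots> = ennreal (b - a)" using emeasure_cbox_cart(1)[OF le] pr by simp
  finally show ?thesis using assms by (simp add: measure_def enn2real_leI)
qed

lemma Qm_slab:
  fixes xs :: "nat \<Rightarrow> real^'r::finite" and i :: 'r
  assumes N: "N > 0" and n: "n > 0" and d0: "0 \<le> \<delta>" and d1: "\<delta> \<le> 1"
    and ab: "0 \<le> a" "a \<le> b" "b \<le> 1"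
  shows "measure (Qm N n \<delta> xs) {x. a < x $ i \<and> x $ i \<le> b} \<le> (real N ^ CARD('r) + 1) * (b - a)"
proof -
  let ?S = "{x::real^'r. a < x $ i \<and> x $ i \<le> b}"
  have S: "?S \<in> sets borel" by measurable
  have nn: "0 \<le> (\<Sum>j\<in>bins N. cq N n \<delta> xs j * measure lborel (?S \<inter> binset N j))"
    by (intro sum_nonneg mult_nonneg_nonneg cq_nonneg[OF d0 d1]) auto
  have "measure (Qm N n \<delta> xs) ?S = (\<Sum>j\<in>bins N. cq N n \<delta> xs j * measure lborel (?S \<inter> binset N j))"
    using Qm_emeasure[OF N d0 d1 S, of n xs] nn by (simp add: measure_def)
  also have "\<dots> \<le> (\<Sum>j\<in>bins N. (real N ^ CARD('r) + 1) * measure lborel (?S \<inter> binset N j))"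
    by (intro sum_mono mult_right_mono cq_le[OF N n d0 d1]) auto
  also have "\<dots> = (real N ^ CARD('r) + 1) * measure lborel (?S \<inter> unit_cube)"
    by (simp add: sum_distrib_left[symmetric] lam_sum_cube[OF N S])
  also have "\<dots> \<le> (real N ^ CARD('r) + 1) * (b - a)"
    by (intro mult_left_mono slab_cube ab) auto
  finally show ?thesis .
qed



lemma ecdf_bounds: "0 \<le> ecdf_vec k zs t" "ecdf_vec k zs t \<le> 1"
proof -
  show "0 \<le> ecdf_vec k zs t" by (simp add: ecdf_vec_def)
  have "card {i\<in>{..<k}. vle (zs i) t} \<le> card {..<k}" by (intro card_mono) auto
  thus "ecdf_vec k zs t \<le> 1" by (cases "k = 0") (auto simp: ecdf_vec_def)
qed

lemma cdf_bounds: "prob_space P \<Longrightarrow> 0 \<le> cdf_vec P t \<and> cdf_vec P t \<le> 1"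
  by (simp add: cdf_vec_def prob_space.prob_le_1)

lemma inner_bound:
  fixes p :: "real^'r::finite \<Rightarrow> real" and xs :: "nat \<Rightarrow> real^'r"
  assumes p_meas[measurable]: "p \<in> borel_measurable borel"
    and p_nonneg: "\<forall>x\<in>unit_cube. 0 \<le> p x"
    and P_prob: "prob_space (density lborel (\<lambda>x. ennreal (indicator unit_cube x * p x)))"
    and p_lip: "\<forall>x\<in>unit_cube. \<forall>y\<in>unit_cube. \<bar>p x - p y\<bar> \<le> L * norm (x - y)" and L: "L \<ge> 0"
    and N: "N > 0" and n: "n > 0" and d0: "0 \<le> \<delta>" and d1: "\<delta> \<le> 1"
    and xs: "\<forall>i<n. xs i \<in> unit_cube" and k: "k > 0" and Mg: "Mg > 0" and eps: "0 \<le> \<epsilon>"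
  shows "(\<integral>\<^sup>+ zs. (SUP x\<in>unit_cube. ennreal \<bar>cdf_vec (density lborel (\<lambda>x. ennreal (indicator unit_cube x * p x))) x - ecdf_vec k zs x\<bar>)
           \<partial>PiM {..<k} (\<lambda>_. density lborel (\<lambda>z. ennreal (priv_density N n \<delta> xs z))))
     \<le> ennreal ((2 * L * real CARD('r) ^ 2 / real N ^ 2 + dX (density lborel (\<lambda>x. ennreal (indicator unit_cube x * p x))) N n xs + \<delta>
           + real CARD('r) * (real N ^ CARD('r) + 1) / real Mg)
         + 1 * (\<epsilon> + 2 * real (Suc Mg ^ CARD('r)) * exp (-2 * real k * \<epsilon>\<^sup>2)))"
proof -
  let ?P = "density lborel (\<lambda>x. ennreal (indicator unit_cube x * p x))"
  let ?Q = "Qm N n \<delta> xs"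
  define c where "c = 2 * L * real CARD('r) ^ 2 / real N ^ 2 + dX ?P N n xs + \<delta>
           + real CARD('r) * (real N ^ CARD('r) + 1) / real Mg"
  define SS where "SS = (\<lambda>g. {x::real^'r. vle x g}) ` (grid Mg :: (real^'r) set)"
  have Qp: "prob_space ?Q" by (rule Qm_prob[OF N n d0 d1 xs])
  have fin: "finite SS" unfolding SS_def using finite_grid by auto
  have cardSS: "card SS \<le> Suc Mg ^ CARD('r)"
    unfolding SS_def using card_image_le[OF finite_grid, of "\<lambda>g. {x::real^'r. vle x g}" Mg] card_grid[where 'r='r, of Mg]
    by linarith
  have SSs: "SS \<subseteq> sets ?Q" unfolding SS_def using vle_sets by auto
  have BX: "\<bar>cdf_vec ?P t - cdf_vec ?Q t\<bar> \<le> 2 * L * real CARD('r) ^ 2 / real N ^ 2 + dX ?P N n xs + \<delta>"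
    if "t \<in> unit_cube" for t by (rule FG_bound[OF p_meas p_nonneg P_prob p_lip L N n d0 d1 xs that])
  have c_nn: "0 \<le> c"
  proof -
    have "0 \<le> \<bar>cdf_vec ?P 0 - cdf_vec ?Q 0\<bar>" by simp
    hence "0 \<le> 2 * L * real CARD('r) ^ 2 / real N ^ 2 + dX ?P N n xs + \<delta>"
      using BX[of 0] by (force simp: unit_cube_def)
    thus ?thesis unfolding c_def by (simp add: add_nonneg_nonneg)
  qed
  have "(\<integral>\<^sup>+ zs. (SUP x\<in>unit_cube. ennreal \<bar>cdf_vec ?P x - ecdf_vec k zs x\<bar>) \<partial>PiM {..<k} (\<lambda>_. ?Q))
      \<le> ennreal (c + 1 * (\<epsilon> + 2 * real (card SS) * exp (-2 * real k * \<epsilon>\<^sup>2)))"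
  proof (rule dev_bound_gen[OF Qp k fin SSs eps c_nn])
    show "0 \<le> (1::real)" by simp
    fix zs
    let ?h = "(SUP x\<in>unit_cube. ennreal \<bar>cdf_vec ?P x - ecdf_vec k zs x\<bar>)"
    have h1: "?h \<le> ennreal (c + 1)"
    proof (rule SUP_least)
      fix x
      have "\<bar>cdf_vec ?P x - ecdf_vec k zs x\<bar> \<le> 1"
        using cdf_bounds[OF P_prob, of x] ecdf_bounds[of k zs x] by linarith
      hence "\<bar>cdf_vec ?P x - ecdf_vec k zs x\<bar> \<le> c + 1" using c_nn by linarith
      thus "ennreal \<bar>cdf_vec ?P x - ecdf_vec k zs x\<bar> \<le> ennreal (c + 1)" by (rule ennreal_leI)
    qed
    have h2: "?h \<le> ennreal (c + 1 * \<epsilon>) \<or>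
      (\<exists>S\<in>SS. \<bar>real (card {i\<in>{..<k}. zs i \<in> S}) / real k - measure ?Q S\<bar> \<ge> \<epsilon>)"
    proof (cases "\<exists>S\<in>SS. \<bar>real (card {i\<in>{..<k}. zs i \<in> S}) / real k - measure ?Q S\<bar> \<ge> \<epsilon>")
      case False
      hence close: "\<forall>g\<in>grid Mg. \<bar>measure ?Q {x. vle x g} - ecdf_vec k zs g\<bar> < \<epsilon>"
        unfolding SS_def by (auto simp: ecdf_vec_def abs_minus_commute not_le)
      have "?h \<le> ennreal (c + 1 * \<epsilon>)"
      proof (rule SUP_least)
        fix t :: "real^'r" assume t: "t \<in> unit_cube"
        have "\<bar>measure ?Q {x. vle x t} - ecdf_vec k zs t\<bar> \<le> \<epsilon> + real CARD('r) * (real N ^ CARD('r) + 1) / real Mg"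
          by (rule grid_approx[OF Qp _ Qm_slab[OF N n d0 d1] Mg _ close t]) auto
        moreover have "cdf_vec ?Q t = measure ?Q {x. vle x t}" by (simp add: cdf_vec_def)
        ultimately have "\<bar>cdf_vec ?P t - ecdf_vec k zs t\<bar> \<le> c + 1 * \<epsilon>"
          using BX[OF t] unfolding c_def by linarith
        thus "ennreal \<bar>cdf_vec ?P t - ecdf_vec k zs t\<bar> \<le> ennreal (c + 1 * \<epsilon>)" by (rule ennreal_leI)
      qed
      thus ?thesis by simp
    qed simp
    show "?h \<le> ennreal (c + 1) \<and> (?h \<le> ennreal (c + 1 * \<epsilon>) \<or>
      (\<exists>S\<in>SS. \<bar>real (card {i\<in>{..<k}. zs i \<in> S}) / real k - measure ?Q S\<bar> \<ge> \<epsilon>))"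
      using h1 h2 by blast
  qed
  also have "\<dots> \<le> ennreal (c + 1 * (\<epsilon> + 2 * real (Suc Mg ^ CARD('r)) * exp (-2 * real k * \<epsilon>\<^sup>2)))"
  proof -
    have "real (card SS) \<le> real (Suc Mg ^ CARD('r))" using cardSS by (rule of_nat_mono)
    thus ?thesis by (intro ennreal_leI add_left_mono mult_left_mono mult_right_mono) auto
  qed
  finally show ?thesis unfolding c_def Qm_def .
qed



lemma dX_bounds:
  fixes p :: "real^'r::finite \<Rightarrow> real" and xs :: "nat \<Rightarrow> real^'r"
  assumes p_meas[measurable]: "p \<in> borel_measurable borel"
    and P_prob: "prob_space (density lborel (\<lambda>x. ennreal (indicator unit_cube x * p x)))"
    and N: "N > 0" and n: "n > 0" and xs: "\<forall>i<n. xs i \<in> unit_cube" and eps: "\<epsilon> \<ge> 0"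
  shows "dX (density lborel (\<lambda>x. ennreal (indicator unit_cube x * p x))) N n xs \<le> 2"
    and "dX (density lborel (\<lambda>x. ennreal (indicator unit_cube x * p x))) N n xs \<le> 2 * \<epsilon> \<or>
      (\<exists>S\<in>(\<lambda>J. \<Union>j\<in>J. binset N j) ` Pow (bins N).
         \<bar>real (card {i\<in>{..<n}. xs i \<in> S}) / real n - measure (density lborel (\<lambda>x. ennreal (indicator unit_cube x * p x))) S\<bar> \<ge> \<epsilon>)"
proof -
  let ?P = "density lborel (\<lambda>x. ennreal (indicator unit_cube x * p x))"
  interpret PP: prob_space ?P by (rule P_prob)
  have [measurable]: "binset N j \<in> sets borel" for j :: "'r \<Rightarrow> nat" using binset_sets[OF N] .
  define pi where "pi j = measure ?P (binset N j)" for j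
  define h where "h j = real (cnt N n xs j) / real n" for j
  have sumpi: "(\<Sum>j\<in>bins N. pi j) = 1"
    using P_decomp[OF p_meas P_prob N, of UNIV] PP.prob_space by (simp add: pi_def)
  have sumh: "(\<Sum>j\<in>bins N. h j) = 1"
  proof -
    have "(\<Sum>j\<in>bins N. real (cnt N n xs j)) = real n"
      using cnt_sum_all[OF N xs] by (metis of_nat_sum)
    thus ?thesis using n by (simp add: h_def sum_divide_distrib[symmetric])
  qed
  have dXe: "dX ?P N n xs = (\<Sum>j\<in>bins N. \<bar>pi j - h j\<bar>)" by (simp add: dX_def pi_def h_def)
  have "(\<Sum>j\<in>bins N. \<bar>pi j - h j\<bar>) \<le> (\<Sum>j\<in>bins N. pi j + h j)"
    by (intro sum_mono) (auto simp: pi_def h_def abs_le_iff)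
  thus "dX ?P N n xs \<le> 2" using sumpi sumh by (simp add: dXe sum.distrib)
  have unionJ: "measure ?P (\<Union>j\<in>J. binset N j) - real (card {i\<in>{..<n}. xs i \<in> (\<Union>j\<in>J. binset N j)}) / real n
      = (\<Sum>j\<in>J. pi j - h j)" if J: "J \<subseteq> bins N" for J
  proof -
    have fJ: "finite J" using J finite_subset finite_bins by blast
    have "measure ?P (\<Union>j\<in>J. binset N j) = (\<Sum>j\<in>J. pi j)" unfolding pi_def
    proof (intro measure_finite_Union fJ)
      show "disjoint_family_on (binset N) J" by (auto simp: disjoint_family_on_def binset_def)
    qed (auto simp: PP.emeasure_finite)
    moreover have "real (card {i\<in>{..<n}. xs i \<in> (\<Union>j\<in>J. binset N j)}) / real n = (\<Sum>j\<in>J. h j)"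
      using cnt_sum[OF fJ, of N n xs] by (simp add: h_def sum_divide_distrib[symmetric] flip: of_nat_sum)
    ultimately show ?thesis by (simp add: sum_subtractf)
  qed
  show "dX ?P N n xs \<le> 2 * \<epsilon> \<or>
      (\<exists>S\<in>(\<lambda>J. \<Union>j\<in>J. binset N j) ` Pow (bins N).
         \<bar>real (card {i\<in>{..<n}. xs i \<in> S}) / real n - measure ?P S\<bar> \<ge> \<epsilon>)"
  proof (rule disjCI)
    assume "\<not> (\<exists>S\<in>(\<lambda>J. \<Union>j\<in>J. binset N j) ` Pow (bins N).
         \<bar>real (card {i\<in>{..<n}. xs i \<in> S}) / real n - measure ?P S\<bar> \<ge> \<epsilon>)"
    hence neg: "\<not> \<bar>real (card {i\<in>{..<n}. xs i \<in> (\<Union>j\<in>J. binset N j)}) / real n - measure ?P (\<Union>j\<in>J. binset N j)\<bar> \<ge> \<epsilon>"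
      if "J \<subseteq> bins N" for J using that by blast
    have small: "\<bar>\<Sum>j\<in>J. pi j - h j\<bar> < \<epsilon>" if "J \<subseteq> bins N" for J
      using unionJ[OF that] neg[OF that] by (simp add: abs_minus_commute not_le)
    define Jp where "Jp = {j\<in>bins N. pi j - h j \<ge> 0}"
    define Jm where "Jm = {j\<in>bins N. \<not> pi j - h j \<ge> 0}"
    have "(\<Sum>j\<in>bins N. \<bar>pi j - h j\<bar>) = (\<Sum>j\<in>Jp. \<bar>pi j - h j\<bar>) + (\<Sum>j\<in>Jm. \<bar>pi j - h j\<bar>)"
    proof -
      have u: "bins N = Jp \<union> Jm" and d: "Jp \<inter> Jm = {}" by (auto simp: Jp_def Jm_def)
      have f: "finite Jp" "finite Jm" by (auto simp: Jp_def Jm_def intro: finite_subset[OF _ finite_bins])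
      show ?thesis by (subst u) (rule sum.union_disjoint[OF f d])
    qed
    also have "(\<Sum>j\<in>Jp. \<bar>pi j - h j\<bar>) = (\<Sum>j\<in>Jp. pi j - h j)" by (intro sum.cong) (auto simp: Jp_def)
    also have "(\<Sum>j\<in>Jm. \<bar>pi j - h j\<bar>) = - (\<Sum>j\<in>Jm. pi j - h j)"
      by (subst sum_negf[symmetric]) (intro sum.cong, auto simp: Jm_def)
    finally have "(\<Sum>j\<in>bins N. \<bar>pi j - h j\<bar>) = (\<Sum>j\<in>Jp. pi j - h j) - (\<Sum>j\<in>Jm. pi j - h j)" by simp
    moreover have "\<bar>\<Sum>j\<in>Jp. pi j - h j\<bar> < \<epsilon>" "\<bar>\<Sum>j\<in>Jm. pi j - h j\<bar> < \<epsilon>"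
      by (intro small; auto simp: Jp_def Jm_def)+
    ultimately show "dX ?P N n xs \<le> 2 * \<epsilon>" unfolding dXe by linarith
  qed
qed

lemma outer_bound:
  fixes p :: "real^'r::finite \<Rightarrow> real"
  assumes p_meas[measurable]: "p \<in> borel_measurable borel"
    and p_nonneg: "\<forall>x\<in>unit_cube. 0 \<le> p x"
    and P_prob: "prob_space (density lborel (\<lambda>x. ennreal (indicator unit_cube x * p x)))"
    and p_lip: "\<forall>x\<in>unit_cube. \<forall>y\<in>unit_cube. \<bar>p x - p y\<bar> \<le> L * norm (x - y)" and L: "L \<ge> 0"
    and N: "N > 0" and n: "n > 0" and d0: "0 \<le> \<delta>" and d1: "\<delta> \<le> 1"
    and k: "k > 0" and Mg: "Mg > 0" and eZ: "0 \<le> \<epsilon>Z" and eX: "0 \<le> \<epsilon>X"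
  shows "expected_sup_error (density lborel (\<lambda>x. ennreal (indicator unit_cube x * p x))) n N k \<delta>
     \<le> ennreal ((2 * L * real CARD('r) ^ 2 / real N ^ 2 + \<delta> + real CARD('r) * (real N ^ CARD('r) + 1) / real Mg
            + (\<epsilon>Z + 2 * real (Suc Mg ^ CARD('r)) * exp (-2 * real k * \<epsilon>Z\<^sup>2)))
         + 2 * (\<epsilon>X + 2 * real (2 ^ (N ^ CARD('r))) * exp (-2 * real n * \<epsilon>X\<^sup>2)))"
proof -
  let ?P = "density lborel (\<lambda>x. ennreal (indicator unit_cube x * p x))"
  interpret PP: prob_space ?P by (rule P_prob)
  define c where "c = 2 * L * real CARD('r) ^ 2 / real N ^ 2 + \<delta> + real CARD('r) * (real N ^ CARD('r) + 1) / real Mg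
            + (\<epsilon>Z + 2 * real (Suc Mg ^ CARD('r)) * exp (-2 * real k * \<epsilon>Z\<^sup>2))"
  define inner where "inner xs = (\<integral>\<^sup>+ zs. (SUP x\<in>unit_cube. ennreal \<bar>cdf_vec ?P x - ecdf_vec k zs x\<bar>)
         \<partial>(PiM {..<k} (\<lambda>_. density lborel (\<lambda>z. ennreal (priv_density N n \<delta> xs z)))))" for xs
  define g where "g xs = (if \<forall>i<n. xs i \<in> unit_cube then inner xs else 0)" for xs
  define SS where "SS = (\<lambda>J. \<Union>j\<in>J. binset N j) ` Pow (bins N :: ('r \<Rightarrow> nat) set)"
  have [measurable]: "binset N j \<in> sets borel" for j :: "'r \<Rightarrow> nat" using binset_sets[OF N] .
  have fin: "finite SS" unfolding SS_def using finite_bins by auto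
  have cardSS: "card SS \<le> 2 ^ (N ^ CARD('r))"
  proof -
    have "card SS \<le> card (Pow (bins N :: ('r \<Rightarrow> nat) set))"
      unfolding SS_def by (intro card_image_le) (simp add: finite_bins)
    also have "\<dots> = 2 ^ (N ^ CARD('r))" by (simp add: card_Pow finite_bins card_bins)
    finally show ?thesis .
  qed
  have SSs: "SS \<subseteq> sets ?P" unfolding SS_def using finite_bins by (auto intro!: sets.finite_UN finite_subset[OF _ finite_bins])
  have c_nn: "0 \<le> c" unfolding c_def using L d0 eZ by (intro add_nonneg_nonneg) auto
  have ae: "AE xs in PiM {..<n} (\<lambda>_. ?P). \<forall>i\<in>{..<n}. xs i \<in> unit_cube"
  proof (intro AE_finite_allI)
    fix i assume i: "i \<in> {..<n}"
    have "AE x in ?P. x \<in> unit_cube" by (subst AE_density) (auto simp: indicator_def)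
    thus "AE xs in PiM {..<n} (\<lambda>_. ?P). xs i \<in> unit_cube"
      using AE_PiM_component[of "{..<n}" "\<lambda>_. ?P" i "\<lambda>x. x \<in> unit_cube"] i P_prob by blast
  qed auto
  have "expected_sup_error ?P n N k \<delta> = (\<integral>\<^sup>+ xs. g xs \<partial>PiM {..<n} (\<lambda>_. ?P))"
    unfolding expected_sup_error_def
    by (rule nn_integral_cong_AE) (use ae in \<open>auto simp: g_def inner_def\<close>)
  also have "\<dots> \<le> ennreal (c + 2 * (\<epsilon>X + 2 * real (card SS) * exp (-2 * real n * \<epsilon>X\<^sup>2)))"
  proof (rule dev_bound_gen[OF P_prob n fin SSs eX c_nn])
    show "0 \<le> (2::real)" by simp
    fix xs
    show "g xs \<le> ennreal (c + 2) \<and> (g xs \<le> ennreal (c + 2 * \<epsilon>X) \<or>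
      (\<exists>S\<in>SS. \<bar>real (card {i\<in>{..<n}. xs i \<in> S}) / real n - measure ?P S\<bar> \<ge> \<epsilon>X))"
    proof (cases "\<forall>i<n. xs i \<in> unit_cube")
      case True
      have ib: "inner xs \<le> ennreal (c + dX ?P N n xs)"
        using inner_bound[OF p_meas p_nonneg P_prob p_lip L N n d0 d1 True k Mg eZ]
        unfolding inner_def c_def by (simp add: algebra_simps)
      have dn: "0 \<le> dX ?P N n xs" by (simp add: dX_def sum_nonneg)
      have g: "g xs = inner xs" using True by (simp add: g_def)
      have b1: "g xs \<le> ennreal (c + 2)"
        using ib dX_bounds(1)[OF p_meas P_prob N n True eX] g
        by (metis add_left_mono ennreal_leI order_trans)
      from dX_bounds(2)[OF p_meas P_prob N n True eX]
      have "g xs \<le> ennreal (c + 2 * \<epsilon>X) \<or>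
        (\<exists>S\<in>SS. \<bar>real (card {i\<in>{..<n}. xs i \<in> S}) / real n - measure ?P S\<bar> \<ge> \<epsilon>X)"
      proof
        assume "dX ?P N n xs \<le> 2 * \<epsilon>X"
        hence "g xs \<le> ennreal (c + 2 * \<epsilon>X)" using ib g
          by (metis add_left_mono ennreal_leI order_trans)
        thus ?thesis ..
      next
        assume "\<exists>S\<in>(\<lambda>J. \<Union>j\<in>J. binset N j) ` Pow (bins N).
         \<bar>real (card {i\<in>{..<n}. xs i \<in> S}) / real n - measure ?P S\<bar> \<ge> \<epsilon>X"
        thus ?thesis unfolding SS_def by blast
      qed
      thus ?thesis using b1 by blast
    next
      case False
      hence "g xs = 0" unfolding g_def by (rule if_not_P)
      thus ?thesis by simp
    qed
  qed
  also have "\<dots> \<le> ennreal (c + 2 * (\<epsilon>X + 2 * real (2 ^ (N ^ CARD('r))) * exp (-2 * real n * \<epsilon>X\<^sup>2)))"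
  proof -
    have "real (card SS) \<le> real (2 ^ (N ^ CARD('r)) :: nat)" using cardSS by (rule of_nat_mono)
    thus ?thesis by (intro ennreal_leI add_left_mono mult_left_mono mult_right_mono) auto
  qed
  finally show ?thesis unfolding c_def .
qed



lemma B1:
  fixes N r :: nat and x c1 :: real
  assumes r: "r \<ge> 1" and x: "x \<ge> 1" and c1: "c1 > 0"
    and lb: "c1 * x powr (real r / (6 + real r)) \<le> real N ^ r"
  shows "1 / real N ^ 2 \<le> (1 / c1 powr (2 / real r)) * x powr (- (2 / (6 + real r)))"
proof -
  have xp: "x > 0" using x by simp
  have "0 < c1 * x powr (real r / (6 + real r))" using c1 xp by simp
  hence Nr: "real N ^ r > 0" using lb by linarith
  have N: "real N > 0"
  proof (rule ccontr)
    assume "\<not> real N > 0"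
    hence "N = 0" by simp
    thus False using Nr r by (simp add: power_0_left)
  qed
  have "(c1 * x powr (real r / (6 + real r))) powr (2 / real r) \<le> (real N ^ r) powr (2 / real r)"
    using lb c1 xp by (intro powr_mono2) auto
  also have "(real N ^ r) powr (2 / real r) = real N ^ 2"
  proof -
    have "(real N ^ r) powr (2 / real r) = (real N powr real r) powr (2 / real r)"
      using N by (simp add: powr_realpow)
    also have "\<dots> = real N powr 2" using r by (simp add: powr_powr)
    also have "\<dots> = real N ^ 2" using powr_realpow[OF N, of 2] by simp
    finally show ?thesis .
  qed
  also have "(c1 * x powr (real r / (6 + real r))) powr (2 / real r) = c1 powr (2 / real r) * x powr (2 / (6 + real r))"
    using c1 xp r by (simp add: powr_mult powr_powr)
  finally have le: "c1 powr (2 / real r) * x powr (2 / (6 + real r)) \<le> real N ^ 2" .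
  have pos: "0 < c1 powr (2 / real r) * x powr (2 / (6 + real r))" using c1 xp by simp
  have "1 / real N ^ 2 \<le> 1 / (c1 powr (2 / real r) * x powr (2 / (6 + real r)))"
    by (rule divide_left_mono[OF le]) (use pos N in auto)
  also have "\<dots> = (1 / c1 powr (2 / real r)) * x powr (- (2 / (6 + real r)))"
    by (simp add: powr_minus_divide)
  finally show ?thesis .
qed

lemma Bdelta:
  fixes r :: nat and x m kk c2 c4 \<alpha> :: real
  assumes r: "r \<ge> 1" and x: "x \<ge> 1" and c2: "c2 > 0" and c4: "c4 > 0" and al: "\<alpha> > 0"
    and m0: "m \<ge> 0" and k0: "kk \<ge> 0"
    and ubm: "m \<le> c2 * x powr (real r / (6 + real r))" and ubk: "kk \<le> c4 * x powr (4 / (6 + real r))"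
  shows "m * kk / (x * \<alpha>) \<le> (c2 * c4 / \<alpha>) * x powr (- (2 / (6 + real r)))"
proof -
  have xp: "x > 0" using x by simp
  have "m * kk \<le> (c2 * x powr (real r / (6 + real r))) * (c4 * x powr (4 / (6 + real r)))"
    using ubm ubk m0 k0 c2 by (intro mult_mono) auto
  also have "\<dots> = c2 * c4 * x powr ((real r + 4) / (6 + real r))"
    by (simp add: powr_add[symmetric] add_divide_distrib)
  finally have "m * kk / (x * \<alpha>) \<le> c2 * c4 * x powr ((real r + 4) / (6 + real r)) / (x * \<alpha>)"
    using xp al by (intro divide_right_mono) auto
  also have "\<dots> = (c2 * c4 / \<alpha>) * (x powr ((real r + 4) / (6 + real r)) / x powr 1)"
    using xp by simp
  also have "x powr ((real r + 4) / (6 + real r)) / x powr 1 = x powr (- (2 / (6 + real r)))"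
  proof -
    have e: "- (2 / (6 + real r)) = (real r + 4) / (6 + real r) - 1" by (simp add: field_simps)
    show ?thesis unfolding e powr_diff using xp by simp
  qed
  finally show ?thesis .
qed

lemma Bk:
  fixes r :: nat and x kk c3 :: real
  assumes r: "r \<ge> 1" and x: "x \<ge> 1" and c3: "c3 > 0"
    and lbk: "c3 * x powr (4 / (6 + real r)) \<le> kk"
  shows "1 / kk \<le> (1 / c3) * x powr (- (2 / (6 + real r)))"
proof -
  have xp: "x > 0" using x by simp
  have pos: "0 < c3 * x powr (4 / (6 + real r))" using c3 xp by simp
  have "1 / kk \<le> 1 / (c3 * x powr (4 / (6 + real r)))"
    using lbk pos by (intro divide_left_mono) auto
  also have "\<dots> = (1 / c3) * x powr (- (4 / (6 + real r)))" by (simp add: powr_minus field_simps)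
  also have "\<dots> \<le> (1 / c3) * x powr (- (2 / (6 + real r)))"
    using c3 x by (intro mult_left_mono powr_mono) (auto simp: divide_right_mono)
  finally show ?thesis .
qed

lemma Bx:
  fixes r :: nat and x :: real
  assumes x: "x \<ge> 1"
  shows "1 / x \<le> x powr (- (2 / (6 + real r)))"
proof -
  have "1 / x = x powr (-1)" using x by (simp add: powr_minus_divide)
  also have "\<dots> \<le> x powr (- (2 / (6 + real r)))" using x by (intro powr_mono) (auto simp: field_simps)
  finally show ?thesis .
qed

lemma ln_ge1: "(x::real) \<ge> 3 \<Longrightarrow> ln x \<ge> 1"
proof -
  assume x: "x \<ge> 3"
  have "exp 1 \<le> x" using exp_le x by linarith
  hence "ln (exp 1) \<le> ln x" using x by (subst ln_le_cancel_iff) auto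
  thus ?thesis by simp
qed

lemma powr_le_self: "(x::real) \<ge> 1 \<Longrightarrow> a \<le> 1 \<Longrightarrow> x powr a \<le> x"
  using powr_mono[of a 1 x] by simp

lemma BZ:
  fixes r mN kN :: nat and x c2 c3 c4 :: real
  assumes r: "r \<ge> 1" and x: "x \<ge> 3" and c2: "c2 > 0" and c3: "c3 > 0" and c4: "c4 > 0"
    and m1: "mN \<ge> 1" and k1: "kN \<ge> 1"
    and ubm: "real mN \<le> c2 * x powr (real r / (6 + real r))"
    and lbk: "c3 * x powr (4 / (6 + real r)) \<le> real kN" and ubk: "real kN \<le> c4 * x powr (4 / (6 + real r))"
  shows "sqrt (ln (2 * real (Suc (mN * kN) ^ r) * real kN) / (2 * real kN))
     \<le> sqrt ((1 + real r * ln (max 1 (2 * c2 * c4)) + ln (max 1 c4) + real r + 1) / (2 * c3)) * sqrt (ln x) * x powr (- (2 / (6 + real r)))"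
proof -
  define A where "A = max 1 (2 * c2 * c4)"
  define C4 where "C4 = max 1 c4"
  define K where "K = 1 + real r * ln A + ln C4 + real r + 1"
  have x1: "x \<ge> 1" and xp: "x > 0" using x by auto
  have lx: "ln x \<ge> 1" using ln_ge1[OF x] .
  have A1: "A \<ge> 1" and C41: "C4 \<ge> 1" by (auto simp: A_def C4_def)
  have mk: "real mN * real kN \<le> c2 * c4 * x powr ((real r + 4) / (6 + real r))"
  proof -
    have "real mN * real kN \<le> (c2 * x powr (real r / (6 + real r))) * (c4 * x powr (4 / (6 + real r)))"
      using ubm ubk c2 by (intro mult_mono) auto
    also have "\<dots> = c2 * c4 * x powr ((real r + 4) / (6 + real r))"
      by (simp add: powr_add[symmetric] add_divide_distrib)
    finally show ?thesis .
  qed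
  have xab: "x powr ((real r + 4) / (6 + real r)) \<le> x" using x1 by (intro powr_le_self) auto
  have xb: "x powr (4 / (6 + real r)) \<le> x" using x1 by (intro powr_le_self) auto
  have "mN * kN \<ge> 1" using m1 k1 by (simp add: Suc_le_eq)
  hence mk1: "real mN * real kN \<ge> 1" by (metis of_nat_1 of_nat_mono of_nat_mult)
  have S: "real (Suc (mN * kN)) \<le> A * x"
  proof -
    have "real (Suc (mN * kN)) = 1 + real mN * real kN" by simp
    hence "real (Suc (mN * kN)) \<le> 2 * (real mN * real kN)" using mk1 by linarith
    also have "\<dots> \<le> 2 * (c2 * c4 * x)"
    proof -
      have "c2 * c4 * x powr ((real r + 4) / (6 + real r)) \<le> c2 * c4 * x"
        by (rule mult_left_mono[OF xab]) (use c2 c4 in simp)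
      thus ?thesis using mk by linarith
    qed
    also have "\<dots> \<le> A * x" using xp by (simp add: A_def mult_right_mono)
    finally show ?thesis .
  qed
  have Kk: "real kN \<le> C4 * x"
  proof -
    have "c4 * x powr (4 / (6 + real r)) \<le> c4 * x" by (rule mult_left_mono[OF xb]) (use c4 in simp)
    hence "real kN \<le> c4 * x" using ubk by linarith
    also have "\<dots> \<le> C4 * x" using xp by (simp add: C4_def mult_right_mono)
    finally show ?thesis .
  qed
  have kp: "real kN > 0" using k1 by simp
  have "0 < Suc (mN * kN) ^ r" by simp
  hence "0 < real (Suc (mN * kN) ^ r)" by (simp only: of_nat_0_less_iff)
  hence Yp: "0 < 2 * real (Suc (mN * kN) ^ r) * real kN" using kp by (intro mult_pos_pos) auto
  have "ln (2 * real (Suc (mN * kN) ^ r) * real kN) \<le> ln (2 * (A * x) ^ r * (C4 * x))"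
  proof (rule ln_mono[OF _ Yp])
    have "real (Suc (mN * kN) ^ r) \<le> (A * x) ^ r" using S by (simp add: power_mono)
    thus "2 * real (Suc (mN * kN) ^ r) * real kN \<le> 2 * (A * x) ^ r * (C4 * x)"
      using Kk kp A1 xp by (intro mult_mono) auto
  qed
  also have "\<dots> = ln 2 + real r * ln A + real r * ln x + ln C4 + ln x"
    using A1 C41 xp by (simp add: ln_mult ln_realpow distrib_left)
  also have "\<dots> \<le> K * ln x"
  proof -
    have "ln 2 \<le> 1 * ln x" using lx ln_2_less_1 by linarith
    moreover have "real r * ln A \<le> (real r * ln A) * ln x"
    proof -
      have "0 \<le> real r * ln A" using A1 by simp
      from mult_left_mono[OF lx this] show ?thesis by simp
    qed
    moreover have "ln C4 \<le> ln C4 * ln x"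
    proof -
      have "0 \<le> ln C4" using C41 by simp
      from mult_left_mono[OF lx this] show ?thesis by simp
    qed
    ultimately show ?thesis unfolding K_def by (simp add: algebra_simps)
  qed
  finally have lnY: "ln (2 * real (Suc (mN * kN) ^ r) * real kN) \<le> K * ln x" .
  have K0: "K \<ge> 0" unfolding K_def using A1 C41 by simp
  have xbp: "x powr (4 / (6 + real r)) > 0" using xp by simp
  have "ln (2 * real (Suc (mN * kN) ^ r) * real kN) / (2 * real kN) \<le> K * ln x / (2 * (c3 * x powr (4 / (6 + real r))))"
  proof (rule frac_le)
    show "0 \<le> K * ln x" using K0 lx by simp
    show "0 < 2 * (c3 * x powr (4 / (6 + real r)))" using c3 xbp by simp
    show "2 * (c3 * x powr (4 / (6 + real r))) \<le> 2 * real kN" using lbk by simp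
  qed (rule lnY)
  also have "\<dots> = (K / (2 * c3)) * ln x * (x powr (- (2 / (6 + real r)))) ^ 2"
  proof -
    have "(x powr (- (2 / (6 + real r)))) ^ 2 = x powr (- (4 / (6 + real r)))"
      using xp by (simp add: powr_powr[symmetric] power2_eq_square powr_add[symmetric])
    thus ?thesis using c3 xp by (simp add: powr_minus field_simps)
  qed
  finally have le: "ln (2 * real (Suc (mN * kN) ^ r) * real kN) / (2 * real kN) \<le> (K / (2 * c3)) * ln x * (x powr (- (2 / (6 + real r)))) ^ 2" .
  have "sqrt (ln (2 * real (Suc (mN * kN) ^ r) * real kN) / (2 * real kN)) \<le> sqrt ((K / (2 * c3)) * ln x * (x powr (- (2 / (6 + real r)))) ^ 2)"
    by (rule real_sqrt_le_mono[OF le])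
  also have "\<dots> = sqrt (K / (2 * c3)) * sqrt (ln x) * sqrt ((x powr (- (2 / (6 + real r)))) ^ 2)"
    by (simp only: real_sqrt_mult)
  also have "sqrt ((x powr (- (2 / (6 + real r)))) ^ 2) = x powr (- (2 / (6 + real r)))"
    by simp
  finally show ?thesis unfolding K_def A_def C4_def .
qed

lemma BXe:
  fixes r mN :: nat and x c2 :: real
  assumes r: "r \<ge> 1" and x: "x \<ge> 3" and c2: "c2 > 0"
    and ubm: "real mN \<le> c2 * x powr (real r / (6 + real r))"
  shows "sqrt (ln (2 * real ((2::nat) ^ mN) * x) / (2 * x))
     \<le> sqrt (c2 / 2 + 1) * sqrt (ln x) * x powr (- (2 / (6 + real r)))"
proof -
  define w where "w = x powr (- (2 / (6 + real r)))"
  have xp: "x > 0" and x1: "x \<ge> 1" using x by auto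
  have lx: "ln x \<ge> 1" using ln_ge1[OF x] .
  have w2: "w ^ 2 = x powr (- (4 / (6 + real r)))"
    unfolding w_def using xp by (simp add: power2_eq_square powr_add[symmetric])
  have "ln (2 * real ((2::nat) ^ mN) * x) = ln 2 + real mN * ln 2 + ln x"
    using xp by (simp add: ln_mult ln_realpow)
  also have "\<dots> \<le> 1 + real mN + ln x"
    using ln_2_less_1 by (smt (verit) mult_left_le of_nat_0_le_iff ln_2_less_1 ln_ge_zero)
  also have "\<dots> \<le> c2 * x powr (real r / (6 + real r)) + 2 * ln x" using ubm lx by linarith
  finally have lnle: "ln (2 * real ((2::nat) ^ mN) * x) \<le> c2 * x powr (real r / (6 + real r)) + 2 * ln x" .
  have "ln (2 * real ((2::nat) ^ mN) * x) / (2 * x) \<le> (c2 * x powr (real r / (6 + real r)) + 2 * ln x) / (2 * x)"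
    using lnle xp by (intro divide_right_mono) auto
  also have "\<dots> = (c2 / 2) * x powr (real r / (6 + real r) - 1) + ln x * x powr (-1)"
  proof -
    have e1: "x powr (real r / (6 + real r) - 1) = x powr (real r / (6 + real r)) / x"
      using xp by (simp add: powr_diff)
    have e2: "x powr (-1) = 1 / x" using xp by (simp add: powr_minus_divide)
    show ?thesis unfolding e1 e2 using xp by (simp add: field_simps)
  qed
  also have "\<dots> \<le> (c2 / 2) * w ^ 2 + ln x * w ^ 2"
  proof (intro add_mono mult_left_mono)
    show "x powr (real r / (6 + real r) - 1) \<le> w ^ 2" unfolding w2
      using x1 by (intro powr_mono) (auto simp: field_simps)
    show "x powr (-1) \<le> w ^ 2" unfolding w2
      using x1 by (intro powr_mono) (auto simp: field_simps)
  qed (use c2 lx in auto)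
  also have "\<dots> \<le> (c2 / 2 + 1) * ln x * w ^ 2"
  proof -
    have "c2 / 2 \<le> (c2 / 2) * ln x" using c2 lx by (simp add: mult_le_cancel_left1)
    hence "(c2 / 2) * w ^ 2 \<le> (c2 / 2) * ln x * w ^ 2" by (intro mult_right_mono) auto
    thus ?thesis by (simp add: algebra_simps)
  qed
  finally have le: "ln (2 * real ((2::nat) ^ mN) * x) / (2 * x) \<le> (c2 / 2 + 1) * ln x * w ^ 2" .
  have "sqrt (ln (2 * real ((2::nat) ^ mN) * x) / (2 * x)) \<le> sqrt ((c2 / 2 + 1) * ln x * w ^ 2)"
    by (rule real_sqrt_le_mono[OF le])
  also have "\<dots> = sqrt (c2 / 2 + 1) * sqrt (ln x) * sqrt (w ^ 2)"
    by (simp only: real_sqrt_mult)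
  also have "sqrt (w ^ 2) = w" by (simp add: w_def)
  finally show ?thesis unfolding w_def .
qed

lemma final_arith:
  fixes N k n r :: nat and L \<alpha> c1 c2 c3 c4 :: real
  assumes r: "r \<ge> 1" and n: "real n \<ge> 3" and L: "L \<ge> 0" and al: "\<alpha> > 0"
    and c1: "c1 > 0" and c2: "c2 > 0" and c3: "c3 > 0" and c4: "c4 > 0"
    and lbN: "c1 * real n powr (real r / (6 + real r)) \<le> real (N ^ r)"
    and ubN: "real (N ^ r) \<le> c2 * real n powr (real r / (6 + real r))"
    and lbk: "c3 * real n powr (4 / (6 + real r)) \<le> real k"
    and ubk: "real k \<le> c4 * real n powr (4 / (6 + real r))"
  defines "Mg \<equiv> N ^ r * k"
  defines "eZ \<equiv> sqrt (ln (2 * real (Suc Mg ^ r) * real k) / (2 * real k))"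
  defines "eX \<equiv> sqrt (ln (2 * real ((2::nat) ^ (N ^ r)) * real n) / (2 * real n))"
  shows "(2 * L * real r ^ 2 / real N ^ 2 + real (N ^ r) * real k / (real n * \<alpha>) + real r * (real (N ^ r) + 1) / real Mg
            + (eZ + 2 * real (Suc Mg ^ r) * exp (-2 * real k * eZ\<^sup>2)))
         + 2 * (eX + 2 * real ((2::nat) ^ (N ^ r)) * exp (-2 * real n * eX\<^sup>2))
     \<le> (2 * L * real r ^ 2 * (1 / c1 powr (2 / real r)) + c2 * c4 / \<alpha> + 2 * real r * (1 / c3)
         + sqrt ((1 + real r * ln (max 1 (2 * c2 * c4)) + ln (max 1 c4) + real r + 1) / (2 * c3))
         + 1 / c3 + 2 * sqrt (c2 / 2 + 1) + 2) * sqrt (ln (real n)) / real n powr (2 / (6 + real r))"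
proof -
  define x where "x = real n"
  define w where "w = x powr (- (2 / (6 + real r)))"
  define sl where "sl = sqrt (ln x)"
  have x3: "x \<ge> 3" using n by (simp add: x_def)
  have x1: "x \<ge> 1" and xp: "x > 0" using x3 by auto
  have sl1: "sl \<ge> 1" using ln_ge1[OF x3] by (simp add: sl_def)
  have w0: "w \<ge> 0" by (simp add: w_def)
  have m1: "N ^ r \<ge> 1"
  proof -
    have "0 < c1 * real n powr (real r / (6 + real r))" using c1 n by simp
    hence "0 < real (N ^ r)" using lbN by linarith
    hence "0 < N ^ r" by (simp only: of_nat_0_less_iff)
    thus ?thesis by linarith
  qed
  have k1: "k \<ge> 1"
  proof -
    have "0 < c3 * real n powr (4 / (6 + real r))" using c3 n by simp
    hence "0 < real k" using lbk by linarith
    thus ?thesis by linarith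
  qed
  have kp: "real k > 0" using k1 by simp
  have mp: "real (N ^ r) \<ge> 1" using m1 by (metis of_nat_1 of_nat_mono)
  have T1: "2 * L * real r ^ 2 / real N ^ 2 \<le> 2 * L * real r ^ 2 * (1 / c1 powr (2 / real r)) * w"
  proof -
    have "1 / real N ^ 2 \<le> (1 / c1 powr (2 / real r)) * w"
      unfolding w_def by (rule B1[OF r x1 c1]) (use lbN in \<open>simp add: x_def\<close>)
    from mult_left_mono[OF this, of "2 * L * real r ^ 2"] L show ?thesis by (simp add: mult.assoc)
  qed
  have T2: "real (N ^ r) * real k / (real n * \<alpha>) \<le> c2 * c4 / \<alpha> * w"
    unfolding w_def x_def[symmetric]
    by (rule Bdelta[OF r x1 c2 c4 al]) (use ubN ubk in \<open>auto simp: x_def\<close>)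
  have Kinv: "1 / real k \<le> (1 / c3) * w"
    unfolding w_def by (rule Bk[OF r x1 c3]) (use lbk in \<open>simp add: x_def\<close>)
  have T3: "real r * (real (N ^ r) + 1) / real Mg \<le> 2 * real r * (1 / c3) * w"
  proof -
    have "real r * (real (N ^ r) + 1) / real Mg = real r * ((real (N ^ r) + 1) / real (N ^ r)) * (1 / real k)"
      by (simp add: Mg_def field_simps)
    also have "(real (N ^ r) + 1) / real (N ^ r) \<le> 2"
    proof -
      have "real (N ^ r) + 1 \<le> 2 * real (N ^ r)" using mp by linarith
      thus ?thesis using mp by (subst divide_le_eq) auto
    qed
    hence "real r * ((real (N ^ r) + 1) / real (N ^ r)) * (1 / real k) \<le> real r * 2 * (1 / real k)"
      using kp by (intro mult_right_mono mult_left_mono) auto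
    also have "\<dots> \<le> real r * 2 * ((1 / c3) * w)" using Kinv by (intro mult_left_mono) auto
    finally show ?thesis by (simp add: mult_ac)
  qed
  have Yp: "0 < 2 * real (Suc Mg ^ r) * real k"
  proof -
    have "0 < Suc Mg ^ r" by simp
    hence "0 < real (Suc Mg ^ r)" by (simp only: of_nat_0_less_iff)
    thus ?thesis using kp by (intro mult_pos_pos) auto
  qed
  have Y1: "1 \<le> 2 * real (Suc Mg ^ r) * real k"
  proof -
    have "1 \<le> Suc Mg ^ r" by simp
    hence "1 \<le> real (Suc Mg ^ r)" by (metis of_nat_1 of_nat_mono)
    moreover have "1 \<le> real k" using k1 by (metis of_nat_1 of_nat_mono)
    ultimately have "1 * 1 \<le> real (Suc Mg ^ r) * real k" by (intro mult_mono) auto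
    thus ?thesis by linarith
  qed
  have eZ2: "2 * real (Suc Mg ^ r) * exp (-2 * real k * eZ\<^sup>2) = 1 / real k"
  proof -
    have "eZ\<^sup>2 = ln (2 * real (Suc Mg ^ r) * real k) / (2 * real k)"
      unfolding eZ_def using Y1 kp by (intro real_sqrt_pow2) auto
    hence "-2 * real k * eZ\<^sup>2 = - ln (2 * real (Suc Mg ^ r) * real k)" using kp by simp
    hence "exp (-2 * real k * eZ\<^sup>2) = 1 / (2 * real (Suc Mg ^ r) * real k)"
      using Yp by (simp add: exp_minus inverse_eq_divide)
    thus ?thesis using Yp kp by (simp add: field_simps)
  qed
  have TZ: "eZ \<le> sqrt ((1 + real r * ln (max 1 (2 * c2 * c4)) + ln (max 1 c4) + real r + 1) / (2 * c3)) * sl * w"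
    unfolding eZ_def Mg_def sl_def w_def
    by (rule BZ[OF r x3 c2 c3 c4 m1 k1]) (use ubN lbk ubk in \<open>simp_all add: x_def\<close>)
  have Xp: "0 < 2 * real ((2::nat) ^ (N ^ r)) * real n" using n by simp
  have X1: "1 \<le> 2 * real ((2::nat) ^ (N ^ r)) * real n"
  proof -
    have "1 \<le> real ((2::nat) ^ (N ^ r))" by simp
    moreover have "1 \<le> real n" using n by simp
    ultimately have "1 * 1 \<le> real ((2::nat) ^ (N ^ r)) * real n" by (intro mult_mono) auto
    thus ?thesis by linarith
  qed
  have eX2: "2 * real ((2::nat) ^ (N ^ r)) * exp (-2 * real n * eX\<^sup>2) = 1 / real n"
  proof -
    have np: "real n > 0" using n by simp
    have "eX\<^sup>2 = ln (2 * real ((2::nat) ^ (N ^ r)) * real n) / (2 * real n)"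
      unfolding eX_def using X1 np by (intro real_sqrt_pow2) auto
    hence "-2 * real n * eX\<^sup>2 = - ln (2 * real ((2::nat) ^ (N ^ r)) * real n)" using np by simp
    hence "exp (-2 * real n * eX\<^sup>2) = 1 / (2 * real ((2::nat) ^ (N ^ r)) * real n)"
      using Xp by (simp add: exp_minus inverse_eq_divide)
    thus ?thesis using Xp np by (simp add: field_simps)
  qed
  have TX: "eX \<le> sqrt (c2 / 2 + 1) * sl * w"
    unfolding eX_def sl_def w_def x_def
    by (rule BXe[OF r _ c2]) (use ubN n in \<open>simp_all add: x_def\<close>)
  have Tn: "1 / real n \<le> w" unfolding w_def x_def by (rule Bx) (use n in simp)
  have wsl: "w \<le> sl * w" using sl1 w0 by (simp add: mult_le_cancel_right1)
  define A where "A = 2 * L * real r ^ 2 * (1 / c1 powr (2 / real r)) + c2 * c4 / \<alpha> + 2 * real r * (1 / c3) + 1 / c3 + 2"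
  define B where "B = sqrt ((1 + real r * ln (max 1 (2 * c2 * c4)) + ln (max 1 c4) + real r + 1) / (2 * c3)) + 2 * sqrt (c2 / 2 + 1)"
  have A0: "A \<ge> 0" unfolding A_def using L c1 c2 c3 c4 al by (intro add_nonneg_nonneg) auto
  have "(2 * L * real r ^ 2 / real N ^ 2 + real (N ^ r) * real k / (real n * \<alpha>) + real r * (real (N ^ r) + 1) / real Mg
            + (eZ + 2 * real (Suc Mg ^ r) * exp (-2 * real k * eZ\<^sup>2)))
         + 2 * (eX + 2 * real ((2::nat) ^ (N ^ r)) * exp (-2 * real n * eX\<^sup>2))
      \<le> A * w + B * sl * w"
    unfolding eZ2 eX2 A_def B_def using T1 T2 T3 TZ Kinv TX Tn by (simp add: algebra_simps)
  also have "\<dots> \<le> A * (sl * w) + B * sl * w" using wsl A0 by (intro add_right_mono mult_left_mono) auto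
  also have "\<dots> = (A + B) * sl * w" by (simp add: algebra_simps)
  also have "\<dots> = (A + B) * sqrt (ln (real n)) / real n powr (2 / (6 + real r))"
    unfolding sl_def w_def x_def by (simp add: powr_minus divide_inverse)
  finally show ?thesis unfolding A_def B_def by (simp add: algebra_simps)
qed


theorem mainTheorem5:
  fixes p :: "real ^ 'r \<Rightarrow> real" and L \<alpha> :: real
    and N k :: "nat \<Rightarrow> nat"
  assumes L_pos: "L > 0"
    and p_meas: "p \<in> borel_measurable borel"
    and p_nonneg: "\<forall>x\<in>unit_cube. 0 \<le> p x"
    and P_prob: "prob_space (density lborel (\<lambda>x. ennreal (indicator unit_cube x * p x)))"
    and p_lip: "\<forall>x\<in>unit_cube. \<forall>y\<in>unit_cube. \<bar>p x - p y\<bar> \<le> L * norm (x - y)"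
    and alpha_pos: "\<alpha> > 0"
    and m_rate: "(\<lambda>n. real (N n ^ CARD('r))) \<in> \<Theta>(\<lambda>n. real n powr (real CARD('r) / (6 + real CARD('r))))"
    and k_rate: "(\<lambda>n. real (k n)) \<in> \<Theta>(\<lambda>n. real n powr (4 / (6 + real CARD('r))))"
  shows "\<exists>C. eventually (\<lambda>n.
     expected_sup_error (density lborel (\<lambda>x. ennreal (indicator unit_cube x * p x))) n (N n) (k n)
        (real (N n ^ CARD('r)) * real (k n) / (real n * \<alpha>))
     \<le> ennreal (C * sqrt (ln (real n)) / real n powr (2 / (6 + real CARD('r))))) sequentially"
proof -
  define r where "r = CARD('r)"
  have r1: "r \<ge> 1" unfolding r_def by (simp add: Suc_le_eq)
  have "(\<lambda>n. real (N n ^ CARD('r))) \<in> O(\<lambda>n. real n powr (real CARD('r) / (6 + real CARD('r))))"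
    using m_rate by blast
  then obtain c2 where c2: "c2 > 0" and ev2: "eventually (\<lambda>n. norm (real (N n ^ CARD('r))) \<le> c2 * norm (real n powr (real CARD('r) / (6 + real CARD('r))))) sequentially"
    by (elim landau_o.bigE) auto
  have "(\<lambda>n. real (N n ^ CARD('r))) \<in> \<Omega>(\<lambda>n. real n powr (real CARD('r) / (6 + real CARD('r))))"
    using m_rate by blast
  then obtain c1 where c1: "c1 > 0" and ev1: "eventually (\<lambda>n. norm (real (N n ^ CARD('r))) \<ge> c1 * norm (real n powr (real CARD('r) / (6 + real CARD('r))))) sequentially"
    by (elim landau_omega.bigE) auto
  have "(\<lambda>n. real (k n)) \<in> O(\<lambda>n. real n powr (4 / (6 + real CARD('r))))"
    using k_rate by blast
  then obtain c4 where c4: "c4 > 0" and ev4: "eventually (\<lambda>n. norm (real (k n)) \<le> c4 * norm (real n powr (4 / (6 + real CARD('r))))) sequentially"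
    by (elim landau_o.bigE) auto
  have "(\<lambda>n. real (k n)) \<in> \<Omega>(\<lambda>n. real n powr (4 / (6 + real CARD('r))))"
    using k_rate by blast
  then obtain c3 where c3: "c3 > 0" and ev3: "eventually (\<lambda>n. norm (real (k n)) \<ge> c3 * norm (real n powr (4 / (6 + real CARD('r))))) sequentially"
    by (elim landau_omega.bigE) auto
  have lim: "(\<lambda>n. real n powr (- (2 / (6 + real r)))) \<longlonglongrightarrow> 0"
    by (rule tendsto_neg_powr) (auto intro: filterlim_real_sequentially)
  have "eventually (\<lambda>n. real n powr (- (2 / (6 + real r))) < \<alpha> / (c2 * c4)) sequentially"
    using order_tendstoD(2)[OF lim, of "\<alpha> / (c2 * c4)"] c2 c4 alpha_pos by simp
  moreover have "eventually (\<lambda>n. real n \<ge> 3) sequentially"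
    using filterlim_real_sequentially by (simp add: filterlim_at_top)
  ultimately have ev: "eventually (\<lambda>n. real n powr (- (2 / (6 + real r))) < \<alpha> / (c2 * c4) \<and> real n \<ge> 3
     \<and> norm (real (N n ^ CARD('r))) \<le> c2 * norm (real n powr (real CARD('r) / (6 + real CARD('r))))
     \<and> norm (real (N n ^ CARD('r))) \<ge> c1 * norm (real n powr (real CARD('r) / (6 + real CARD('r))))
     \<and> norm (real (k n)) \<le> c4 * norm (real n powr (4 / (6 + real CARD('r))))
     \<and> norm (real (k n)) \<ge> c3 * norm (real n powr (4 / (6 + real CARD('r))))) sequentially"
    using ev1 ev2 ev3 ev4 by eventually_elim auto
  define C where "C = (2 * L * real r ^ 2 * (1 / c1 powr (2 / real r)) + c2 * c4 / \<alpha> + 2 * real r * (1 / c3)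
         + sqrt ((1 + real r * ln (max 1 (2 * c2 * c4)) + ln (max 1 c4) + real r + 1) / (2 * c3))
         + 1 / c3 + 2 * sqrt (c2 / 2 + 1) + 2)"
  show ?thesis
  proof (rule exI[of _ C], rule eventually_mono[OF ev], elim conjE)
    fix n
    assume small: "real n powr (- (2 / (6 + real r))) < \<alpha> / (c2 * c4)" and n3: "real n \<ge> 3"
      and u2: "norm (real (N n ^ CARD('r))) \<le> c2 * norm (real n powr (real CARD('r) / (6 + real CARD('r))))"
      and u1: "norm (real (N n ^ CARD('r))) \<ge> c1 * norm (real n powr (real CARD('r) / (6 + real CARD('r))))"
      and u4: "norm (real (k n)) \<le> c4 * norm (real n powr (4 / (6 + real CARD('r))))"
      and u3: "norm (real (k n)) \<ge> c3 * norm (real n powr (4 / (6 + real CARD('r))))"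
    have lbN: "c1 * real n powr (real r / (6 + real r)) \<le> real (N n ^ r)" using u1 by (simp add: r_def)
    have ubN: "real (N n ^ r) \<le> c2 * real n powr (real r / (6 + real r))" using u2 by (simp add: r_def)
    have lbk: "c3 * real n powr (4 / (6 + real r)) \<le> real (k n)" using u3 by (simp add: r_def)
    have ubk: "real (k n) \<le> c4 * real n powr (4 / (6 + real r))" using u4 by (simp add: r_def)
    define \<delta> where "\<delta> = real (N n ^ r) * real (k n) / (real n * \<alpha>)"
    define Mg where "Mg = N n ^ r * k n"
    define eZ where "eZ = sqrt (ln (2 * real (Suc Mg ^ r) * real (k n)) / (2 * real (k n)))"
    define eX where "eX = sqrt (ln (2 * real ((2::nat) ^ (N n ^ r)) * real n) / (2 * real n))"
    have n0: "n > 0" using n3 by (cases n) auto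
    have Np: "0 < real (N n ^ r)"
    proof -
      have "0 < c1 * real n powr (real r / (6 + real r))" using c1 n0 by simp
      thus ?thesis using lbN by linarith
    qed
    hence N0: "N n > 0" using r1 by (metis of_nat_0_less_iff neq0_conv power_0_left not_one_le_zero)
    have kp: "0 < real (k n)"
    proof -
      have "0 < c3 * real n powr (4 / (6 + real r))" using c3 n0 by simp
      thus ?thesis using lbk by linarith
    qed
    hence k0: "k n > 0" by simp
    have Mg0: "Mg > 0" unfolding Mg_def using Np k0 by (simp add: of_nat_0_less_iff)
    have d0: "0 \<le> \<delta>" unfolding \<delta>_def using alpha_pos by simp
    have d1: "\<delta> \<le> 1"
    proof -
      have "\<delta> \<le> (c2 * c4 / \<alpha>) * real n powr (- (2 / (6 + real r)))"
        unfolding \<delta>_def by (rule Bdelta[OF r1 _ c2 c4 alpha_pos]) (use n3 ubN ubk in auto)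
      also have "\<dots> \<le> (c2 * c4 / \<alpha>) * (\<alpha> / (c2 * c4))"
        using small c2 c4 alpha_pos by (intro mult_left_mono) auto
      also have "\<dots> = 1" using c2 c4 alpha_pos by simp
      finally show ?thesis .
    qed
    have eZ0: "0 \<le> eZ"
    proof -
      have "1 \<le> real (Suc Mg ^ r)" by (metis One_nat_def of_nat_1 of_nat_mono one_le_power Suc_le_mono zero_le)
      moreover have "1 \<le> real (k n)" using k0 by simp
      ultimately have "1 * 1 \<le> real (Suc Mg ^ r) * real (k n)" by (intro mult_mono) auto
      hence "0 \<le> ln (2 * real (Suc Mg ^ r) * real (k n))" by simp
      thus ?thesis unfolding eZ_def using kp by simp
    qed
    have eX0: "0 \<le> eX"
    proof -
      have "1 \<le> real ((2::nat) ^ (N n ^ r))" by simp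
      moreover have "1 \<le> real n" using n3 by simp
      ultimately have "1 * 1 \<le> real ((2::nat) ^ (N n ^ r)) * real n" by (intro mult_mono) auto
      hence "0 \<le> ln (2 * real ((2::nat) ^ (N n ^ r)) * real n)" by simp
      thus ?thesis unfolding eX_def using n0 by simp
    qed
    have ob: "expected_sup_error (density lborel (\<lambda>x. ennreal (indicator unit_cube x * p x))) n (N n) (k n) \<delta>
     \<le> ennreal ((2 * L * real CARD('r) ^ 2 / real (N n) ^ 2 + \<delta> + real CARD('r) * (real (N n) ^ CARD('r) + 1) / real Mg
            + (eZ + 2 * real (Suc Mg ^ CARD('r)) * exp (-2 * real (k n) * eZ\<^sup>2)))
         + 2 * (eX + 2 * real (2 ^ (N n ^ CARD('r))) * exp (-2 * real n * eX\<^sup>2)))"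
      by (rule outer_bound[OF p_meas p_nonneg P_prob p_lip _ N0 n0 d0 d1 k0 Mg0])
         (use L_pos eZ0 eX0 in auto)
    have fa: "(2 * L * real r ^ 2 / real (N n) ^ 2 + real (N n ^ r) * real (k n) / (real n * \<alpha>) + real r * (real (N n ^ r) + 1) / real Mg
            + (eZ + 2 * real (Suc Mg ^ r) * exp (-2 * real (k n) * eZ\<^sup>2)))
         + 2 * (eX + 2 * real ((2::nat) ^ (N n ^ r)) * exp (-2 * real n * eX\<^sup>2))
     \<le> C * sqrt (ln (real n)) / real n powr (2 / (6 + real r))"
      unfolding C_def eZ_def eX_def Mg_def
      by (rule final_arith[OF r1 n3 _ alpha_pos c1 c2 c3 c4 lbN ubN lbk ubk]) (use L_pos in simp)
    show "expected_sup_error (density lborel (\<lambda>x. ennreal (indicator unit_cube x * p x))) n (N n) (k n)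
        (real (N n ^ CARD('r)) * real (k n) / (real n * \<alpha>))
     \<le> ennreal (C * sqrt (ln (real n)) / real n powr (2 / (6 + real CARD('r))))"
      using ob fa unfolding \<delta>_def r_def by (simp add: ennreal_leI order_trans)
  qed
qed

end
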